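(* Let $(L,[\cdot,\cdot],\{\cdot,\cdot,\cdot\},\alpha)$ be a Hom-Lie-Yamaguti algebra over a field $\mathbb{K}$. If $HomH^2(L,L)\times HomH^3(L,L)=0$, then $(L,[\cdot,\cdot],\{\cdot,\cdot,\cdot\},\alpha)$ is analytically rigid.
   Context: A Hom-Lie-Yamaguti algebra (HLYA) over a commutative ring $R$ (here $R=\mathbb{K}$ a field or $R=\mathbb{K}[[t]]$) is a quadruple $(L,[\cdot,\cdot],\{\cdot,\cdot,\cdot\},\alpha)$ where $L$ is an $R$-module, $[\cdot,\cdot]$ is an $R$-bilinear and $\{\cdot,\cdot,\cdot\}$ an $R$-trilinear operation on $L$ (written $[xy]$, $\{xyz\}$), and $\alpha:L\to L$ is $R$-linear, such that for all $x,y,z,u,v\in L$: $\alpha([xy])=[\alpha(x)\alpha(y)]$; $\alpha(\{xyz\})=\{\alpha(x)\alpha(y)\alpha(z)\}$; $[xx]=0$; $\{xxy\}=0$; $\circlearrowleft_{x,y,z}([[xy]\alpha(z)]+\{xyz\})=0$; $\circlearrowleft_{x,y,z}\{[xy]\alpha(z)\alpha(u)\}=0$; $\{\alpha(x)\alpha(y)[uv]\}=[\{xyu\}\alpha^2(v)]+[\alpha^2(u)\{xyv\}]$; $\{\alpha^2(u)\alpha^2(v)\{xyz\}\}=\{\{uvx\}\alpha^2(y)\alpha^2(z)\}+\{\alpha^2(x)\{uvy\}\alpha^2(z)\}+\{\alpha^2(x)\alpha^2(y)\{uvz\}\}$, where $\circlearrowleft_{x,y,z}$ denotes the sum over cyclic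 permutations of $x,y,z$. Cochains: for $n\ge1$, $HomC^n(L,L)$ is the set of $\mathbb{K}$-multilinear maps $f:L^n\to L$ with $f(x_1,\dots,x_n)=0$ whenever $x_{2i-1}=x_{2i}$ for some $i$, and $f(\alpha(x_1),\dots,\alpha(x_n))=\alpha(f(x_1,\dots,x_n))$. For $h\in HomC^1(L,L)$ put $\delta_I^1h(x,y)=[xh(y)]+[h(x)y]-h([xy])$ and $\delta_{II}^1h(x,y,z)=\{h(x)yz\}+\{xh(y)z\}+\{xyh(z)\}-h(\{xyz\})$. For $(f,g)\in HomC^2(L,L)\times HomC^3(L,L)$ put $\delta_I^2(f,g)(x,y,z,u)=\{\alpha(x)\alpha(y)f(z,u)\}-f(\{xyz\},\alpha^2(u))-f(\alpha^2(z),\{xyu\})+g(\alpha(x),\alpha(y),[zu])-[\alpha^2(z)g(x,y,u)]-[g(x,y,z)\alpha^2(u)]$, $\delta_{II}^2 g(x,y,u,v,w)=\{\alpha^2(x)\alpha^2(y)g(u,v,w)\}-\{g(x,y,u)\alpha^2(v)\alpha^2(w)\}-\{\alpha^2(u)g(x,y,v)\alpha^2(w)\}-\{\alpha^2(u)\alpha^2(v)g(x,y,w)\}+g(\alpha^2(x),\alpha^2(y),\{uvw\})-g(\{xyu\},\alpha^2(v),\alpha^2(w))-g(\alpha^2(u),\{xyv\},\alpha^2(w))-g(\alpha^2(u),\alpha^2(v),\{xyw\})$, $d_I^2(f,g)(x,y,z)=\circlearrowleft_{x,y,z}([f(x,y)\alpha(z)]+f([xy],\alpha(z))+g(x,y,z))$,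 $d_{II}^2(f,g)(x,y,z,u)=\circlearrowleft_{x,y,z}(\{f(x,y)\alpha(z)\alpha(u)\}+g([xy],\alpha(z),\alpha(u)))$. Then $HomZ^2(L,L)\times HomZ^3(L,L)$ is the set of $(f,g)\in HomC^2\times HomC^3$ with $\delta_I^2(f,g)=0$, $\delta_{II}^2g=0$, $d_I^2(f,g)=0$, $d_{II}^2(f,g)=0$; $HomB^2(L,L)\times HomB^3(L,L)=\{(\delta_I^1h,\delta_{II}^1h): h\in HomC^1(L,L)\}$ (contained in the former); and $HomH^2(L,L)\times HomH^3(L,L)=(HomZ^2\times HomZ^3)/(HomB^2\times HomB^3)$. Deformations: $\mathbb{K}$-multilinear maps on $L$ are extended $\mathbb{K}[[t]]$-multilinearly to $L[[t]]$, and $\alpha$ is extended $\mathbb{K}[[t]]$-linearly. A one-parameter formal deformation of $(L,[\cdot,\cdot],\{\cdot,\cdot,\cdot\},\alpha)$ is a pair $f_t=\sum_{i\ge0}f_it^i$, $g_t=\sum_{i\ge0}g_it^i$ with $f_0=[\cdot,\cdot]$, $g_0=\{\cdot,\cdot,\cdot\}$, each $f_i$ $\mathbb{K}$-bilinear on $L$ and each $g_i$ $\mathbb{K}$-trilinear on $L$, such that $(L[[t]],f_t,g_t,\alpha)$ is an HLYA over $\mathbb{K}[[t]]$. Two deformations $(f_t,g_t)$, $(f_t',g_t')$ are equivalent if there is a $\mathbb{K}[[t]]$-linear isomorphism $\Phi_t=\sum_{i\ge0}\phi_it^i$ of $L[[t]]$ (each $\phi_i:L\to L$ $\mathbb{K}$-linear)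 with $\phi_0=\mathrm{id}_L$, $\Phi_t\circ\alpha=\alpha\circ\Phi_t$, $\Phi_t(f_t(x,y))=f_t'(\Phi_t(x),\Phi_t(y))$ and $\Phi_t(g_t(x,y,z))=g_t'(\Phi_t(x),\Phi_t(y),\Phi_t(z))$. A deformation is trivial if it is equivalent to the null deformation $(f_0,g_0)$ (i.e. $f_i=0$, $g_i=0$ for all $i\ge1$). The HLYA is analytically rigid if every one-parameter formal deformation of it is trivial. *)

theory Defs
  imports Main "HOL-Computational_Algebra.Formal_Power_Series"
begin

definition lin :: "('r \<Rightarrow> 'm \<Rightarrow> 'm) \<Rightarrow> ('m::ab_group_add \<Rightarrow> 'm) \<Rightarrow> bool" where
  "lin s h \<longleftrightarrow> (\<forall>x y. h (x + y) = h x + h y) \<and> (\<forall>c x. h (s c x) = s c (h x))"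

definition bilin :: "('r \<Rightarrow> 'm \<Rightarrow> 'm) \<Rightarrow> ('m::ab_group_add \<Rightarrow> 'm \<Rightarrow> 'm) \<Rightarrow> bool" where
  "bilin s f \<longleftrightarrow> (\<forall>y. lin s (\<lambda>x. f x y)) \<and> (\<forall>x. lin s (\<lambda>y. f x y))"

definition trilin :: "('r \<Rightarrow> 'm \<Rightarrow> 'm) \<Rightarrow> ('m::ab_group_add \<Rightarrow> 'm \<Rightarrow> 'm \<Rightarrow> 'm) \<Rightarrow> bool" where
  "trilin s g \<longleftrightarrow> (\<forall>y z. lin s (\<lambda>x. g x y z)) \<and> (\<forall>x z. lin s (\<lambda>y. g x y z))
                 \<and> (\<forall>x y. lin s (\<lambda>z. g x y z))"

section \<open>Hom-Lie-Yamaguti algebras over a commutative ring R (module given by scalar action s)\<close>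

definition hlya :: "('r::comm_ring_1 \<Rightarrow> 'm \<Rightarrow> 'm) \<Rightarrow> ('m::ab_group_add \<Rightarrow> 'm \<Rightarrow> 'm)
     \<Rightarrow> ('m \<Rightarrow> 'm \<Rightarrow> 'm \<Rightarrow> 'm) \<Rightarrow> ('m \<Rightarrow> 'm) \<Rightarrow> bool" where
  "hlya s b T a \<longleftrightarrow> module s \<and> bilin s b \<and> trilin s T \<and> lin s a \<and>
    (\<forall>x y. a (b x y) = b (a x) (a y)) \<and>
    (\<forall>x y z. a (T x y z) = T (a x) (a y) (a z)) \<and>
    (\<forall>x. b x x = 0) \<and>
    (\<forall>x y. T x x y = 0) \<and>
    (\<forall>x y z. (b (b x y) (a z) + T x y z) + (b (b y z) (a x) + T y z x)
               + (b (b z x) (a y) + T z x y) = 0) \<and>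
    (\<forall>x y z u. T (b x y) (a z) (a u) + T (b y z) (a x) (a u) + T (b z x) (a y) (a u) = 0) \<and>
    (\<forall>x y u v. T (a x) (a y) (b u v) = b (T x y u) (a (a v)) + b (a (a u)) (T x y v)) \<and>
    (\<forall>x y z u v. T (a (a u)) (a (a v)) (T x y z)
        = T (T u v x) (a (a y)) (a (a z)) + T (a (a x)) (T u v y) (a (a z))
          + T (a (a x)) (a (a y)) (T u v z))"

definition HomC1 :: "('k \<Rightarrow> 'v \<Rightarrow> 'v) \<Rightarrow> ('v \<Rightarrow> 'v) \<Rightarrow> ('v::ab_group_add \<Rightarrow> 'v) \<Rightarrow> bool" where
  "HomC1 s a h \<longleftrightarrow> lin s h \<and> (\<forall>x. h (a x) = a (h x))"

definition HomC2 :: "('k \<Rightarrow> 'v \<Rightarrow> 'v) \<Rightarrow> ('v \<Rightarrow> 'v) \<Rightarrow> ('v::ab_group_add \<Rightarrow> 'v \<Rightarrow> 'v) \<Rightarrow> bool" where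
  "HomC2 s a f \<longleftrightarrow> bilin s f \<and> (\<forall>x. f x x = 0) \<and> (\<forall>x y. f (a x) (a y) = a (f x y))"

definition HomC3 :: "('k \<Rightarrow> 'v \<Rightarrow> 'v) \<Rightarrow> ('v \<Rightarrow> 'v) \<Rightarrow> ('v::ab_group_add \<Rightarrow> 'v \<Rightarrow> 'v \<Rightarrow> 'v) \<Rightarrow> bool" where
  "HomC3 s a g \<longleftrightarrow> trilin s g \<and> (\<forall>x z. g x x z = 0) \<and>
     (\<forall>x y z. g (a x) (a y) (a z) = a (g x y z))"

definition deltaI1 :: "('v::ab_group_add \<Rightarrow> 'v \<Rightarrow> 'v) \<Rightarrow> ('v \<Rightarrow> 'v) \<Rightarrow> 'v \<Rightarrow> 'v \<Rightarrow> 'v" where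
  "deltaI1 b h x y = b x (h y) + b (h x) y - h (b x y)"

definition deltaII1 :: "('v::ab_group_add \<Rightarrow> 'v \<Rightarrow> 'v \<Rightarrow> 'v) \<Rightarrow> ('v \<Rightarrow> 'v) \<Rightarrow> 'v \<Rightarrow> 'v \<Rightarrow> 'v \<Rightarrow> 'v" where
  "deltaII1 T h x y z = T (h x) y z + T x (h y) z + T x y (h z) - h (T x y z)"

definition deltaI2 :: "('v::ab_group_add \<Rightarrow> 'v \<Rightarrow> 'v) \<Rightarrow> ('v \<Rightarrow> 'v \<Rightarrow> 'v \<Rightarrow> 'v) \<Rightarrow> ('v \<Rightarrow> 'v)
     \<Rightarrow> ('v \<Rightarrow> 'v \<Rightarrow> 'v) \<Rightarrow> ('v \<Rightarrow> 'v \<Rightarrow> 'v \<Rightarrow> 'v) \<Rightarrow> 'v \<Rightarrow> 'v \<Rightarrow> 'v \<Rightarrow> 'v \<Rightarrow> 'v" where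
  "deltaI2 b T a f g x y z u =
     T (a x) (a y) (f z u) - f (T x y z) (a (a u)) - f (a (a z)) (T x y u)
     + g (a x) (a y) (b z u) - b (a (a z)) (g x y u) - b (g x y z) (a (a u))"

definition deltaII2 :: "('v::ab_group_add \<Rightarrow> 'v \<Rightarrow> 'v \<Rightarrow> 'v) \<Rightarrow> ('v \<Rightarrow> 'v)
     \<Rightarrow> ('v \<Rightarrow> 'v \<Rightarrow> 'v \<Rightarrow> 'v) \<Rightarrow> 'v \<Rightarrow> 'v \<Rightarrow> 'v \<Rightarrow> 'v \<Rightarrow> 'v \<Rightarrow> 'v" where
  "deltaII2 T a g x y u v w =
     T (a (a x)) (a (a y)) (g u v w) - T (g x y u) (a (a v)) (a (a w))
     - T (a (a u)) (g x y v) (a (a w)) - T (a (a u)) (a (a v)) (g x y w)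
     + g (a (a x)) (a (a y)) (T u v w) - g (T x y u) (a (a v)) (a (a w))
     - g (a (a u)) (T x y v) (a (a w)) - g (a (a u)) (a (a v)) (T x y w)"

definition dI2 :: "('v::ab_group_add \<Rightarrow> 'v \<Rightarrow> 'v) \<Rightarrow> ('v \<Rightarrow> 'v)
     \<Rightarrow> ('v \<Rightarrow> 'v \<Rightarrow> 'v) \<Rightarrow> ('v \<Rightarrow> 'v \<Rightarrow> 'v \<Rightarrow> 'v) \<Rightarrow> 'v \<Rightarrow> 'v \<Rightarrow> 'v \<Rightarrow> 'v" where
  "dI2 b a f g x y z =
     (b (f x y) (a z) + f (b x y) (a z) + g x y z)
   + (b (f y z) (a x) + f (b y z) (a x) + g y z x)
   + (b (f z x) (a y) + f (b z x) (a y) + g z x y)"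

definition dII2 :: "('v::ab_group_add \<Rightarrow> 'v \<Rightarrow> 'v) \<Rightarrow> ('v \<Rightarrow> 'v \<Rightarrow> 'v \<Rightarrow> 'v) \<Rightarrow> ('v \<Rightarrow> 'v)
     \<Rightarrow> ('v \<Rightarrow> 'v \<Rightarrow> 'v) \<Rightarrow> ('v \<Rightarrow> 'v \<Rightarrow> 'v \<Rightarrow> 'v) \<Rightarrow> 'v \<Rightarrow> 'v \<Rightarrow> 'v \<Rightarrow> 'v \<Rightarrow> 'v" where
  "dII2 b T a f g x y z u =
     (T (f x y) (a z) (a u) + g (b x y) (a z) (a u))
   + (T (f y z) (a x) (a u) + g (b y z) (a x) (a u))
   + (T (f z x) (a y) (a u) + g (b z x) (a y) (a u))"

definition HomZ23 :: "('k \<Rightarrow> 'v \<Rightarrow> 'v) \<Rightarrow> ('v::ab_group_add \<Rightarrow> 'v \<Rightarrow> 'v) \<Rightarrow> ('v \<Rightarrow> 'v \<Rightarrow> 'v \<Rightarrow> 'v)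
     \<Rightarrow> ('v \<Rightarrow> 'v) \<Rightarrow> ('v \<Rightarrow> 'v \<Rightarrow> 'v) \<Rightarrow> ('v \<Rightarrow> 'v \<Rightarrow> 'v \<Rightarrow> 'v) \<Rightarrow> bool" where
  "HomZ23 s b T a f g \<longleftrightarrow> HomC2 s a f \<and> HomC3 s a g \<and>
     (\<forall>x y z u. deltaI2 b T a f g x y z u = 0) \<and>
     (\<forall>x y u v w. deltaII2 T a g x y u v w = 0) \<and>
     (\<forall>x y z. dI2 b a f g x y z = 0) \<and>
     (\<forall>x y z u. dII2 b T a f g x y z u = 0)"

definition HomB23 :: "('k \<Rightarrow> 'v \<Rightarrow> 'v) \<Rightarrow> ('v::ab_group_add \<Rightarrow> 'v \<Rightarrow> 'v) \<Rightarrow> ('v \<Rightarrow> 'v \<Rightarrow> 'v \<Rightarrow> 'v)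
     \<Rightarrow> ('v \<Rightarrow> 'v) \<Rightarrow> ('v \<Rightarrow> 'v \<Rightarrow> 'v) \<Rightarrow> ('v \<Rightarrow> 'v \<Rightarrow> 'v \<Rightarrow> 'v) \<Rightarrow> bool" where
  "HomB23 s b T a f g \<longleftrightarrow> (\<exists>h. HomC1 s a h \<and> f = deltaI1 b h \<and> g = deltaII1 T h)"

definition HomH23_zero :: "('k \<Rightarrow> 'v \<Rightarrow> 'v) \<Rightarrow> ('v::ab_group_add \<Rightarrow> 'v \<Rightarrow> 'v)
     \<Rightarrow> ('v \<Rightarrow> 'v \<Rightarrow> 'v \<Rightarrow> 'v) \<Rightarrow> ('v \<Rightarrow> 'v) \<Rightarrow> bool" where
  "HomH23_zero s b T a \<longleftrightarrow> (\<forall>f g. HomZ23 s b T a f g \<longrightarrow> HomB23 s b T a f g)"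

section \<open>L[[t]] (as 'v fps) and the K[[t]]-multilinear extensions\<close>

definition fps_scale :: "('k \<Rightarrow> 'v \<Rightarrow> 'v) \<Rightarrow> 'k fps \<Rightarrow> 'v::comm_monoid_add fps \<Rightarrow> 'v fps" where
  "fps_scale s c x = Abs_fps (\<lambda>n. \<Sum>i\<le>n. s (fps_nth c (i)) (fps_nth x ((n - i))))"

definition ext_map :: "('v \<Rightarrow> 'v) \<Rightarrow> 'v fps \<Rightarrow> 'v fps" where
  "ext_map a x = Abs_fps (\<lambda>n. a (fps_nth x (n)))"

definition ext1 :: "(nat \<Rightarrow> 'v \<Rightarrow> 'v) \<Rightarrow> 'v::comm_monoid_add fps \<Rightarrow> 'v fps" where
  "ext1 P x = Abs_fps (\<lambda>n. \<Sum>i\<le>n. P i (fps_nth x ((n - i))))"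

definition ext2 :: "(nat \<Rightarrow> 'v \<Rightarrow> 'v \<Rightarrow> 'v) \<Rightarrow> 'v::comm_monoid_add fps \<Rightarrow> 'v fps \<Rightarrow> 'v fps" where
  "ext2 F x y = Abs_fps (\<lambda>n. \<Sum>i\<le>n. \<Sum>j\<le>n - i. F i (fps_nth x (j)) (fps_nth y ((n - i - j))))"

definition ext3 :: "(nat \<Rightarrow> 'v \<Rightarrow> 'v \<Rightarrow> 'v \<Rightarrow> 'v) \<Rightarrow> 'v::comm_monoid_add fps \<Rightarrow> 'v fps \<Rightarrow> 'v fps \<Rightarrow> 'v fps" where
  "ext3 G x y z = Abs_fps (\<lambda>n. \<Sum>i\<le>n. \<Sum>j\<le>n - i. \<Sum>k\<le>n - i - j.
       G i (fps_nth x (j)) (fps_nth y (k)) (fps_nth z ((n - i - j - k))))"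

definition deformation :: "('k::field \<Rightarrow> 'v \<Rightarrow> 'v) \<Rightarrow> ('v::ab_group_add \<Rightarrow> 'v \<Rightarrow> 'v)
     \<Rightarrow> ('v \<Rightarrow> 'v \<Rightarrow> 'v \<Rightarrow> 'v) \<Rightarrow> ('v \<Rightarrow> 'v)
     \<Rightarrow> (nat \<Rightarrow> 'v \<Rightarrow> 'v \<Rightarrow> 'v) \<Rightarrow> (nat \<Rightarrow> 'v \<Rightarrow> 'v \<Rightarrow> 'v \<Rightarrow> 'v) \<Rightarrow> bool" where
  "deformation s b T a F G \<longleftrightarrow> F 0 = b \<and> G 0 = T \<and>
     (\<forall>i. bilin s (F i)) \<and> (\<forall>i. trilin s (G i)) \<and>
     hlya (fps_scale s) (ext2 F) (ext3 G) (ext_map a)"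

definition equivalent_deformations :: "('k::field \<Rightarrow> 'v \<Rightarrow> 'v) \<Rightarrow> ('v::ab_group_add \<Rightarrow> 'v)
     \<Rightarrow> (nat \<Rightarrow> 'v \<Rightarrow> 'v \<Rightarrow> 'v) \<Rightarrow> (nat \<Rightarrow> 'v \<Rightarrow> 'v \<Rightarrow> 'v \<Rightarrow> 'v)
     \<Rightarrow> (nat \<Rightarrow> 'v \<Rightarrow> 'v \<Rightarrow> 'v) \<Rightarrow> (nat \<Rightarrow> 'v \<Rightarrow> 'v \<Rightarrow> 'v \<Rightarrow> 'v) \<Rightarrow> bool" where
  "equivalent_deformations s a F G F' G' \<longleftrightarrow>
     (\<exists>P. P 0 = id \<and> (\<forall>i. lin s (P i)) \<and>
        lin (fps_scale s) (ext1 P) \<and> bij (ext1 P) \<and>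
        ext1 P \<circ> ext_map a = ext_map a \<circ> ext1 P \<and>
        (\<forall>x y. ext1 P (ext2 F x y) = ext2 F' (ext1 P x) (ext1 P y)) \<and>
        (\<forall>x y z. ext1 P (ext3 G x y z) = ext3 G' (ext1 P x) (ext1 P y) (ext1 P z)))"

definition null_br :: "('v::zero \<Rightarrow> 'v \<Rightarrow> 'v) \<Rightarrow> nat \<Rightarrow> 'v \<Rightarrow> 'v \<Rightarrow> 'v" where
  "null_br b i = (if i = 0 then b else (\<lambda>x y. 0))"

definition null_tr :: "('v::zero \<Rightarrow> 'v \<Rightarrow> 'v \<Rightarrow> 'v) \<Rightarrow> nat \<Rightarrow> 'v \<Rightarrow> 'v \<Rightarrow> 'v \<Rightarrow> 'v" where
  "null_tr T i = (if i = 0 then T else (\<lambda>x y z. 0))"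

definition analytically_rigid :: "('k::field \<Rightarrow> 'v \<Rightarrow> 'v) \<Rightarrow> ('v::ab_group_add \<Rightarrow> 'v \<Rightarrow> 'v)
     \<Rightarrow> ('v \<Rightarrow> 'v \<Rightarrow> 'v \<Rightarrow> 'v) \<Rightarrow> ('v \<Rightarrow> 'v) \<Rightarrow> bool" where
  "analytically_rigid s b T a \<longleftrightarrow>
     (\<forall>F G. deformation s b T a F G \<longrightarrow>
        equivalent_deformations s a F G (null_br b) (null_tr T))"

end

theory Submission imports Defs begin
unbundle fps_syntax

lemma add_sum:
  fixes f :: "'a::ab_group_add \<Rightarrow> 'b::ab_group_add"
  assumes "\<And>x y. f (x + y) = f x + f y"
  shows "f (sum g A) = (\<Sum>x\<in>A. f (g x))"
proof -
  have f0: "f 0 = 0" using assms[of 0 0] by simp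
  show ?thesis
    by (induction A rule: infinite_finite_induct) (simp_all add: f0 assms)
qed

lemma sum_only0:
  assumes "\<And>j. 0 < j \<Longrightarrow> j \<le> k \<Longrightarrow> g j = 0"
  shows "(\<Sum>j\<le>(k::nat). g j) = (g 0 :: 'a::comm_monoid_add)"
proof -
  have "(\<Sum>j\<le>k. g j) = (\<Sum>j\<in>{0}. g j)"
    by (intro sum.mono_neutral_right) (auto intro!: assms)
  then show ?thesis by simp
qed

lemma sum_onlylast:
  assumes "\<And>j. j < k \<Longrightarrow> g j = 0"
  shows "(\<Sum>j\<le>(k::nat). g j) = (g k :: 'a::comm_monoid_add)"
proof -
  have "(\<Sum>j\<le>k. g j) = (\<Sum>j\<in>{k}. g j)"
    by (intro sum.mono_neutral_right) (auto intro!: assms)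
  then show ?thesis by simp
qed

lemma sum_ends:
  assumes "\<And>j. 0 < j \<Longrightarrow> j < k \<Longrightarrow> g j = 0" and "0 < k"
  shows "(\<Sum>j\<le>(k::nat). g j) = (g 0 + g k :: 'a::comm_monoid_add)"
proof -
  have "(\<Sum>j\<le>k. g j) = (\<Sum>j\<in>{0,k}. g j)"
    by (intro sum.mono_neutral_right) (auto intro!: assms)
  then show ?thesis using assms by simp
qed

definition tri :: "nat \<Rightarrow> (nat \<times> nat \<times> nat) set" where
  "tri m = {(i,j,k). i + j + k = m}"

definition quad :: "nat \<Rightarrow> (nat \<times> nat \<times> nat \<times> nat) set" where
  "quad m = {(i,j,k,l). i + j + k + l = m}"

lemma T1:
  "(\<Sum>i\<le>m. \<Sum>j\<le>m - i. f i j (m - i - j)) = (\<Sum>(i,j,k)\<in>tri m. (f i j k :: 'a::comm_monoid_add))"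
proof -
  have "(\<Sum>i\<le>m. \<Sum>j\<le>m - i. f i j (m - i - j)) = (\<Sum>(i,j)\<in>Sigma {..m} (\<lambda>i. {..m-i}). f i j (m - i - j))"
    by (rule sum.Sigma) auto
  also have "\<dots> = (\<Sum>(i,j,k)\<in>tri m. f i j k)"
    by (rule sum.reindex_bij_witness[where i="\<lambda>(i,j,k). (i,j)" and j="\<lambda>(i,j). (i,j,m-i-j)"])
       (auto simp: tri_def)
  finally show ?thesis .
qed

lemma T2:
  "(\<Sum>k\<le>m. \<Sum>i\<le>k. f i (k - i) (m - k)) = (\<Sum>(i,j,k)\<in>tri m. (f i j k :: 'a::comm_monoid_add))"
proof -
  have "(\<Sum>k\<le>m. \<Sum>i\<le>k. f i (k - i) (m - k)) = (\<Sum>(k,i)\<in>Sigma {..m} (\<lambda>k. {..k}). f i (k - i) (m - k))"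
    by (rule sum.Sigma) auto
  also have "\<dots> = (\<Sum>(i,j,k)\<in>tri m. f i j k)"
    by (rule sum.reindex_bij_witness[where i="\<lambda>(i,j,k). (i+j,i)" and j="\<lambda>(k,i). (i,k-i,m-k)"])
       (auto simp: tri_def)
  finally show ?thesis .
qed

lemma T3:
  "(\<Sum>i\<le>m. \<Sum>j\<le>m - i. \<Sum>k\<le>m - i - j. f i j k (m - i - j - k))
     = (\<Sum>(i,j,k,l)\<in>quad m. (f i j k l :: 'a::comm_monoid_add))"
proof -
  have "(\<Sum>i\<le>m. \<Sum>j\<le>m - i. \<Sum>k\<le>m - i - j. f i j k (m - i - j - k))
     = (\<Sum>i\<le>m. \<Sum>(j,k)\<in>Sigma {..m-i} (\<lambda>j. {..m-i-j}). f i j k (m - i - j - k))"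
    by (rule sum.cong[OF refl], rule sum.Sigma) auto
  also have "\<dots> = (\<Sum>(i,jk)\<in>Sigma {..m} (\<lambda>i. Sigma {..m-i} (\<lambda>j. {..m-i-j})). 
        (case jk of (j,k) \<Rightarrow> f i j k (m - i - j - k)))"
    by (subst sum.Sigma) (auto simp: case_prod_beta)
  also have "\<dots> = (\<Sum>(i,j,k,l)\<in>quad m. f i j k l)"
    by (rule sum.reindex_bij_witness[where i="\<lambda>(i,j,k,l). (i,j,k)" and j="\<lambda>(i,j,k). (i,j,k,m-i-j-k)"])
       (auto simp: quad_def)
  finally show ?thesis .
qed

lemma tri_swap: "(\<Sum>(i,j,k)\<in>tri m. f i j k) = (\<Sum>(i,j,k)\<in>tri m. (f j i k :: 'a::comm_monoid_add))"
  by (rule sum.reindex_bij_witness[where i="\<lambda>(i,j,k). (j,i,k)" and j="\<lambda>(i,j,k). (j,i,k)"])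
     (auto simp: tri_def)

lemma tri_rot: "(\<Sum>(i,j,k)\<in>tri m. f i j k) = (\<Sum>(i,j,k)\<in>tri m. (f j k i :: 'a::comm_monoid_add))"
  by (rule sum.reindex_bij_witness[where i="\<lambda>(i,j,k). (j,k,i)" and j="\<lambda>(i,j,k). (k,i,j)"])
     (auto simp: tri_def)

lemma quad_rot: "(\<Sum>(i,j,k,l)\<in>quad m. f i j k l) = (\<Sum>(i,j,k,l)\<in>quad m. (f j k l i :: 'a::comm_monoid_add))"
  by (rule sum.reindex_bij_witness[where i="\<lambda>(i,j,k,l). (j,k,l,i)" and j="\<lambda>(i,j,k,l). (l,i,j,k)"])
     (auto simp: quad_def)


lemma lin_add: "lin s h \<Longrightarrow> h (x + y) = h x + h y" by (simp add: lin_def)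
lemma lin_scale: "lin s h \<Longrightarrow> h (s c x) = s c (h x)" by (simp add: lin_def)
lemma lin_zero: "lin s h \<Longrightarrow> h 0 = 0"
  using lin_add[of s h 0 0] by simp
lemma lin_minus: "lin s h \<Longrightarrow> h (- x) = - h x"
  using lin_add[of s h x "- x"] lin_zero[of s h] by (simp add: eq_neg_iff_add_eq_0 add.commute)
lemma lin_diff: "lin s h \<Longrightarrow> h (x - y) = h x - h y"
  using lin_add[of s h x "- y"] lin_minus[of s h y] by simp
lemma lin_sum: "lin s h \<Longrightarrow> h (sum g A) = (\<Sum>x\<in>A. h (g x))"
  by (rule add_sum) (simp add: lin_add)

lemma bilin1: "bilin s f \<Longrightarrow> lin s (\<lambda>x. f x y)" by (simp add: bilin_def)
lemma bilin2: "bilin s f \<Longrightarrow> lin s (\<lambda>y. f x y)" by (simp add: bilin_def)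
lemma trilin1: "trilin s f \<Longrightarrow> lin s (\<lambda>x. f x y z)" by (simp add: trilin_def)
lemma trilin2: "trilin s f \<Longrightarrow> lin s (\<lambda>y. f x y z)" by (simp add: trilin_def)
lemma trilin3: "trilin s f \<Longrightarrow> lin s (\<lambda>z. f x y z)" by (simp add: trilin_def)

lemma bilin_zero1: "bilin s f \<Longrightarrow> f 0 y = 0" using lin_zero[OF bilin1] by blast
lemma bilin_zero2: "bilin s f \<Longrightarrow> f x 0 = 0" using lin_zero[OF bilin2] by blast
lemma trilin_zero1: "trilin s f \<Longrightarrow> f 0 y z = 0" using lin_zero[OF trilin1] by blast
lemma trilin_zero2: "trilin s f \<Longrightarrow> f x 0 z = 0" using lin_zero[OF trilin2] by blast
lemma trilin_zero3: "trilin s f \<Longrightarrow> f x y 0 = 0" using lin_zero[OF trilin3] by blast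

lemma ext1_nth: "ext1 P x $ n = (\<Sum>i\<le>n. P i (x $ (n - i)))" by (simp add: ext1_def)
lemma ext2_nth: "ext2 F x y $ n = (\<Sum>i\<le>n. \<Sum>j\<le>n - i. F i (x $ j) (y $ (n - i - j)))"
  by (simp add: ext2_def)
lemma ext3_nth: "ext3 G x y z $ n = (\<Sum>i\<le>n. \<Sum>j\<le>n - i. \<Sum>k\<le>n - i - j.
       G i (x $ j) (y $ k) (z $ (n - i - j - k)))"
  by (simp add: ext3_def)
lemma ext_map_nth: "ext_map a x $ n = a (x $ n)" by (simp add: ext_map_def)
lemma fps_scale_nth: "fps_scale s c x $ n = (\<Sum>i\<le>n. s (c $ i) (x $ (n - i)))"
  by (simp add: fps_scale_def)

lemma fps_scale_const_nth:
  assumes "module s"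
  shows "fps_scale s (fps_const k) w $ n = s k (w $ n)"
proof -
  have "fps_scale s (fps_const k) w $ n = (\<Sum>i\<le>n. s (fps_const k $ i) (w $ (n - i)))"
    by (simp add: fps_scale_nth)
  also have "\<dots> = s (fps_const k $ 0) (w $ (n - 0))"
    by (rule sum_only0) (simp add: module.scale_zero_left[OF assms])
  finally show ?thesis by simp
qed

lemma fps_scale_X_nth:
  assumes "module s"
  shows "fps_scale s fps_X w $ n = (if n = 0 then 0 else w $ (n - 1))"
proof (cases n)
  case 0 then show ?thesis by (simp add: fps_scale_nth module.scale_zero_left[OF assms])
next
  case (Suc m)
  have "fps_scale s fps_X w $ n = (\<Sum>i\<le>n. s (fps_X $ i) (w $ (n - i)))"
    by (simp add: fps_scale_nth)
  also have "\<dots> = (\<Sum>i\<in>{1}. s (fps_X $ i) (w $ (n - i)))"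
    by (rule sum.mono_neutral_right) (auto simp: Suc module.scale_zero_left[OF assms] fps_X_nth)
  finally show ?thesis by (simp add: Suc fps_X_nth module.scale_one[OF assms])
qed

lemma fps_scale_const_const:
  assumes "module s"
  shows "fps_scale s (fps_const k) (fps_const u) = fps_const (s k u)"
  by (rule fps_ext) (simp add: fps_scale_const_nth[OF assms] module.scale_zero_right[OF assms])

lemma ext_map_const: "lin s a \<Longrightarrow> ext_map a (fps_const x) = fps_const (a x)"
  by (rule fps_ext) (simp add: ext_map_nth lin_zero)

definition conv1 :: "(nat \<Rightarrow> 'v \<Rightarrow> 'v) \<Rightarrow> (nat \<Rightarrow> 'v \<Rightarrow> 'v) \<Rightarrow> nat \<Rightarrow> 'v \<Rightarrow> 'v::comm_monoid_add" where
  "conv1 P Q k v = (\<Sum>i\<le>k. P i (Q (k - i) v))"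

lemma ext1_conv1:
  fixes P Q :: "nat \<Rightarrow> 'v::ab_group_add \<Rightarrow> 'v"
  assumes "\<And>i x y. P i (x + y) = P i x + P i y"
  shows "ext1 P (ext1 Q x) = ext1 (conv1 P Q) x"
proof (rule fps_ext)
  fix m
  have Ps: "\<And>i g A. P i (sum g A) = (\<Sum>x\<in>A. P i (g x))" by (rule add_sum) (rule assms)
  have "ext1 P (ext1 Q x) $ m = (\<Sum>i\<le>m. \<Sum>j\<le>m - i. P i (Q j (x $ (m - i - j))))"
    by (simp add: ext1_nth Ps diff_diff_add)
  also have "\<dots> = (\<Sum>(i,j,k)\<in>tri m. P i (Q j (x $ k)))" by (rule T1)
  also have "\<dots> = (\<Sum>k\<le>m. \<Sum>i\<le>k. P i (Q (k - i) (x $ (m - k))))" by (rule T2[symmetric])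
  also have "\<dots> = ext1 (conv1 P Q) x $ m" by (simp add: ext1_nth conv1_def)
  finally show "ext1 P (ext1 Q x) $ m = ext1 (conv1 P Q) x $ m" .
qed

lemma ext1_lin:
  fixes s :: "'k::field \<Rightarrow> 'v::ab_group_add \<Rightarrow> 'v"
  assumes ms: "module s" and P: "\<And>i. lin s (P i)"
  shows "lin (fps_scale s) (ext1 P)"
  unfolding lin_def
proof (intro conjI allI)
  fix x y :: "'v fps"
  show "ext1 P (x + y) = ext1 P x + ext1 P y"
    by (rule fps_ext) (simp add: ext1_nth lin_add[OF P] sum.distrib)
next
  fix c :: "'k fps" and x :: "'v fps"
  show "ext1 P (fps_scale s c x) = fps_scale s c (ext1 P x)"
  proof (rule fps_ext)
    fix m
    have "ext1 P (fps_scale s c x) $ m = (\<Sum>i\<le>m. \<Sum>j\<le>m - i. s (c $ j) (P i (x $ (m - i - j))))"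
      by (simp add: ext1_nth fps_scale_nth lin_sum[OF P] lin_scale[OF P] diff_diff_add)
    also have "\<dots> = (\<Sum>(i,j,k)\<in>tri m. s (c $ j) (P i (x $ k)))" by (rule T1)
    also have "\<dots> = (\<Sum>(j,i,k)\<in>tri m. s (c $ j) (P i (x $ k)))" by (rule tri_swap)
    also have "\<dots> = (\<Sum>j\<le>m. \<Sum>i\<le>m - j. s (c $ j) (P i (x $ (m - j - i))))" by (rule T1[symmetric])
    also have "\<dots> = fps_scale s c (ext1 P x) $ m"
      by (simp add: ext1_nth fps_scale_nth module.scale_sum_right[OF ms] diff_diff_add)
    finally show "ext1 P (fps_scale s c x) $ m = fps_scale s c (ext1 P x) $ m" .
  qed
qed

lemma ext1_comm:
  assumes "lin s a" and "\<And>i x. P i (a x) = a (P i x)"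
  shows "ext1 P \<circ> ext_map a = ext_map a \<circ> ext1 P"
  by (rule ext, rule fps_ext) (simp add: ext1_nth ext_map_nth assms lin_sum[OF assms(1)])

lemma ext1_split:
  "ext1 P x $ n = P 0 (x $ n) + (\<Sum>j<n. P (n - j) (x $ j))"
proof -
  have "ext1 P x $ n = (\<Sum>i\<le>n. P i (x $ (n - i)))" by (simp add: ext1_nth)
  also have "\<dots> = P 0 (x $ n) + (\<Sum>i<n. P (Suc i) (x $ (n - Suc i)))"
    by (cases n) (simp_all add: sum.atMost_Suc_shift lessThan_Suc_atMost del: sum.atMost_Suc)
  also have "(\<Sum>i<n. P (Suc i) (x $ (n - Suc i))) = (\<Sum>i<n. P (n - (n - Suc i)) (x $ (n - Suc i)))"
    by (rule sum.cong) auto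
  also have "\<dots> = (\<Sum>j<n. P (n - j) (x $ j))"
    by (rule sum.nat_diff_reindex)
  finally show ?thesis .
qed

fun preim :: "(nat \<Rightarrow> 'v \<Rightarrow> 'v) \<Rightarrow> 'v::ab_group_add fps \<Rightarrow> nat \<Rightarrow> 'v" where
  "preim P y n = y $ n - (\<Sum>j\<in>{..<n}. P (n - j) (preim P y j))"

declare preim.simps[simp del]

lemma ext1_bij:
  fixes P :: "nat \<Rightarrow> 'v::ab_group_add \<Rightarrow> 'v"
  assumes "P 0 = id"
  shows "bij (ext1 P)"
proof (rule bijI)
  show "inj (ext1 P)"
  proof (rule injI)
    fix x y assume eq: "ext1 P x = ext1 P y"
    have "\<forall>j<n. x $ j = y $ j" for n
    proof (induction n)
      case 0 then show ?case by simp
    next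
      case (Suc n)
      have "ext1 P x $ n = ext1 P y $ n" using eq by simp
      then have "x $ n + (\<Sum>j<n. P (n - j) (x $ j)) = y $ n + (\<Sum>j<n. P (n - j) (y $ j))"
        by (simp add: ext1_split assms)
      moreover have "(\<Sum>j<n. P (n - j) (x $ j)) = (\<Sum>j<n. P (n - j) (y $ j))"
        using Suc by simp
      ultimately have "x $ n = y $ n" by simp
      then show ?case using Suc by (simp add: less_Suc_eq)
    qed
    then show "x = y" by (intro fps_ext) blast
  qed
next
  show "surj (ext1 P)"
  proof (rule surjI)
    fix y
    show "ext1 P (Abs_fps (preim P y)) = y"
    proof (rule fps_ext)
      fix n
      show "ext1 P (Abs_fps (preim P y)) $ n = y $ n"
        by (simp add: ext1_split assms preim.simps[of P y n])
    qed
  qed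
qed

lemma ext1_cong_nth:
  assumes "\<And>i. i \<le> n \<Longrightarrow> P i = Q i" "\<And>j. j \<le> n \<Longrightarrow> x $ j = y $ j"
  shows "ext1 P x $ n = ext1 Q y $ n"
  unfolding ext1_nth using assms by (intro sum.cong) auto

lemma ext2_cong_nth:
  assumes "\<And>i. i \<le> n \<Longrightarrow> F i = F' i" "\<And>j. j \<le> n \<Longrightarrow> x $ j = x' $ j"
     "\<And>j. j \<le> n \<Longrightarrow> y $ j = y' $ j"
  shows "ext2 F x y $ n = ext2 F' x' y' $ n"
  unfolding ext2_nth using assms by (intro sum.cong) auto

lemma ext3_cong_nth:
  assumes "\<And>i. i \<le> n \<Longrightarrow> G i = G' i" "\<And>j. j \<le> n \<Longrightarrow> x $ j = x' $ j"
     "\<And>j. j \<le> n \<Longrightarrow> y $ j = y' $ j" "\<And>j. j \<le> n \<Longrightarrow> z $ j = z' $ j"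
  shows "ext3 G x y z $ n = ext3 G' x' y' z' $ n"
  unfolding ext3_nth using assms by (intro sum.cong) auto


section \<open>Representation of K[[t]]-multilinear maps\<close>

lemma rep1:
  fixes s :: "'k::field \<Rightarrow> 'v::ab_group_add \<Rightarrow> 'v"
  assumes ms: "module s" and L: "lin (fps_scale s) \<Lambda>"
  shows "\<Lambda> x $ m = (\<Sum>j\<le>m. \<Lambda> (fps_const (x $ j)) $ (m - j))"
proof (induction m arbitrary: x)
  case 0
  define t where "t = Abs_fps (\<lambda>n. x $ Suc n)"
  have dec: "x = fps_const (x $ 0) + fps_scale s fps_X t"
    by (rule fps_ext) (simp add: fps_scale_X_nth[OF ms] t_def)
  have "\<Lambda> x = \<Lambda> (fps_const (x $ 0)) + fps_scale s fps_X (\<Lambda> t)"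
    by (subst dec) (simp add: lin_add[OF L] lin_scale[OF L])
  then have "\<Lambda> x $ 0 = \<Lambda> (fps_const (x $ 0)) $ 0"
    by (simp add: fps_scale_X_nth[OF ms])
  then show ?case by simp
next
  case (Suc m)
  define t where "t = Abs_fps (\<lambda>n. x $ Suc n)"
  have dec: "x = fps_const (x $ 0) + fps_scale s fps_X t"
    by (rule fps_ext) (simp add: fps_scale_X_nth[OF ms] t_def)
  have "\<Lambda> x = \<Lambda> (fps_const (x $ 0)) + fps_scale s fps_X (\<Lambda> t)"
    by (subst dec) (simp add: lin_add[OF L] lin_scale[OF L])
  then have "\<Lambda> x $ Suc m = \<Lambda> (fps_const (x $ 0)) $ Suc m + \<Lambda> t $ m"
    by (simp add: fps_scale_X_nth[OF ms])
  also have "\<Lambda> t $ m = (\<Sum>j\<le>m. \<Lambda> (fps_const (x $ Suc j)) $ (m - j))"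
    using Suc.IH[of t] by (simp add: t_def)
  finally show ?case
    by (simp add: sum.atMost_Suc_shift del: sum.atMost_Suc)
qed

lemma rep2:
  fixes s :: "'k::field \<Rightarrow> 'v::ab_group_add \<Rightarrow> 'v"
  assumes ms: "module s" and B: "bilin (fps_scale s) B"
  shows "B = ext2 (\<lambda>i u v. B (fps_const u) (fps_const v) $ i)"
proof (intro ext fps_ext)
  fix x y m
  have "B x y $ m = (\<Sum>j\<le>m. B (fps_const (x $ j)) y $ (m - j))"
    by (rule rep1[OF ms bilin1[OF B]])
  also have "\<dots> = (\<Sum>j\<le>m. \<Sum>l\<le>m - j. B (fps_const (x $ j)) (fps_const (y $ l)) $ (m - j - l))"
    by (rule sum.cong[OF refl], rule rep1[OF ms bilin2[OF B]])
  also have "\<dots> = (\<Sum>(j,l,i)\<in>tri m. B (fps_const (x $ j)) (fps_const (y $ l)) $ i)"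
    by (rule T1)
  also have "\<dots> = (\<Sum>(i,j,l)\<in>tri m. B (fps_const (x $ j)) (fps_const (y $ l)) $ i)"
    using tri_rot[of "\<lambda>j l i. B (fps_const (x $ j)) (fps_const (y $ l)) $ i" m] by simp
  also have "\<dots> = ext2 (\<lambda>i u v. B (fps_const u) (fps_const v) $ i) x y $ m"
    unfolding ext2_nth using T1[of "\<lambda>i j l. B (fps_const (x $ j)) (fps_const (y $ l)) $ i" m] by simp
  finally show "B x y $ m = ext2 (\<lambda>i u v. B (fps_const u) (fps_const v) $ i) x y $ m" .
qed

lemma rep3:
  fixes s :: "'k::field \<Rightarrow> 'v::ab_group_add \<Rightarrow> 'v"
  assumes ms: "module s" and G: "trilin (fps_scale s) G"
  shows "G = ext3 (\<lambda>i u v w. G (fps_const u) (fps_const v) (fps_const w) $ i)"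
proof (intro ext fps_ext)
  fix x y z m
  have "G x y z $ m = (\<Sum>j\<le>m. G (fps_const (x $ j)) y z $ (m - j))"
    by (rule rep1[OF ms trilin1[OF G]])
  also have "\<dots> = (\<Sum>j\<le>m. \<Sum>l\<le>m - j. G (fps_const (x $ j)) (fps_const (y $ l)) z $ (m - j - l))"
    by (rule sum.cong[OF refl], rule rep1[OF ms trilin2[OF G]])
  also have "\<dots> = (\<Sum>j\<le>m. \<Sum>l\<le>m - j. \<Sum>p\<le>m - j - l.
        G (fps_const (x $ j)) (fps_const (y $ l)) (fps_const (z $ p)) $ (m - j - l - p))"
    by (rule sum.cong[OF refl], rule sum.cong[OF refl], rule rep1[OF ms trilin3[OF G]])
  also have "\<dots> = (\<Sum>(j,l,p,i)\<in>quad m. G (fps_const (x $ j)) (fps_const (y $ l)) (fps_const (z $ p)) $ i)"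
    by (rule T3)
  also have "\<dots> = (\<Sum>(i,j,l,p)\<in>quad m. G (fps_const (x $ j)) (fps_const (y $ l)) (fps_const (z $ p)) $ i)"
    using quad_rot[of "\<lambda>j l p i. G (fps_const (x $ j)) (fps_const (y $ l)) (fps_const (z $ p)) $ i" m] by simp
  also have "\<dots> = ext3 (\<lambda>i u v w. G (fps_const u) (fps_const v) (fps_const w) $ i) x y z $ m"
    unfolding ext3_nth using T3[of "\<lambda>i j l p. G (fps_const (x $ j)) (fps_const (y $ l)) (fps_const (z $ p)) $ i" m] by simp
  finally show "G x y z $ m = ext3 (\<lambda>i u v w. G (fps_const u) (fps_const v) (fps_const w) $ i) x y z $ m" .
qed


section \<open>Transport of structure\<close>

lemma transport_hlya:
  fixes S :: "'r::comm_ring_1 \<Rightarrow> 'm::ab_group_add \<Rightarrow> 'm"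
  assumes H: "hlya S B Tt A" and bj: "bij \<Phi>" and Pl: "lin S \<Phi>"
    and PA: "\<And>x. \<Phi> (A x) = A (\<Phi> x)"
  shows "hlya S (\<lambda>x y. \<Phi> (B (inv \<Phi> x) (inv \<Phi> y)))
                 (\<lambda>x y z. \<Phi> (Tt (inv \<Phi> x) (inv \<Phi> y) (inv \<Phi> z))) A"
proof -
  define \<Psi> where "\<Psi> = inv \<Phi>"
  have PP: "\<Phi> (\<Psi> x) = x" for x using bj by (simp add: \<Psi>_def bij_is_surj surj_f_inv_f)
  have QP: "\<Psi> (\<Phi> x) = x" for x using bj by (simp add: \<Psi>_def bij_is_inj)
  have Qadd: "\<Psi> (x + y) = \<Psi> x + \<Psi> y" for x y
    by (metis PP QP lin_add[OF Pl])
  have Qsc: "\<Psi> (S c x) = S c (\<Psi> x)" for c x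
    by (metis PP QP lin_scale[OF Pl])
  have QA: "\<Psi> (A x) = A (\<Psi> x)" for x
    by (metis PP QP PA)
  have Ql: "lin S \<Psi>" by (simp add: lin_def Qadd Qsc)
  note HH = H[unfolded hlya_def]
  have ms: "module S" using HH by (elim conjE) assumption
  have Bb: "bilin S B" using HH by (elim conjE) assumption
  have Tl: "trilin S Tt" using HH by (elim conjE) assumption
  have Al: "lin S A" using HH by (elim conjE) assumption
  have h1: "\<forall>x y. A (B x y) = B (A x) (A y)" using HH by (elim conjE) assumption
  have h2: "\<forall>x y z. A (Tt x y z) = Tt (A x) (A y) (A z)" using HH by (elim conjE) assumption
  have h3: "\<forall>x. B x x = 0" using HH by (elim conjE) assumption
  have h4: "\<forall>x y. Tt x x y = 0" using HH by (elim conjE) assumption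
  have h5: "\<forall>x y z. (B (B x y) (A z) + Tt x y z) + (B (B y z) (A x) + Tt y z x)
               + (B (B z x) (A y) + Tt z x y) = 0" using HH by (elim conjE) assumption
  have h6: "\<forall>x y z u. Tt (B x y) (A z) (A u) + Tt (B y z) (A x) (A u) + Tt (B z x) (A y) (A u) = 0" using HH by (elim conjE) assumption
  have h7: "\<forall>x y u v. Tt (A x) (A y) (B u v) = B (Tt x y u) (A (A v)) + B (A (A u)) (Tt x y v)" using HH by (elim conjE) assumption
  have h8: "\<forall>x y z u v. Tt (A (A u)) (A (A v)) (Tt x y z)
        = Tt (Tt u v x) (A (A y)) (A (A z)) + Tt (A (A x)) (Tt u v y) (A (A z))
          + Tt (A (A x)) (A (A y)) (Tt u v z)" using HH by (elim conjE) assumption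

  have AP: "A (\<Phi> x) = \<Phi> (A x)" for x by (simp add: PA)
  note Ba = lin_add[OF bilin1[OF Bb]] lin_add[OF bilin2[OF Bb]]
  note Bs = lin_scale[OF bilin1[OF Bb]] lin_scale[OF bilin2[OF Bb]]
  note Ta = lin_add[OF trilin1[OF Tl]] lin_add[OF trilin2[OF Tl]] lin_add[OF trilin3[OF Tl]]
  note Ts = lin_scale[OF trilin1[OF Tl]] lin_scale[OF trilin2[OF Tl]] lin_scale[OF trilin3[OF Tl]]
  note Pa = lin_add[OF Pl] and Ps = lin_scale[OF Pl] and P0 = lin_zero[OF Pl]
  note simps = PP QP Qadd Qsc QA AP Ba Bs Ta Ts Pa Ps
  show ?thesis
    unfolding hlya_def \<Psi>_def[symmetric]
  proof (intro conjI allI)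
    show "module S" by (rule ms)
    show "bilin S (\<lambda>x y. \<Phi> (B (\<Psi> x) (\<Psi> y)))"
      by (simp add: bilin_def lin_def simps)
    show "trilin S (\<lambda>x y z. \<Phi> (Tt (\<Psi> x) (\<Psi> y) (\<Psi> z)))"
      by (simp add: trilin_def lin_def simps)
    show "lin S A" by (rule Al)
    fix x y z u v
    show "A (\<Phi> (B (\<Psi> x) (\<Psi> y))) = \<Phi> (B (\<Psi> (A x)) (\<Psi> (A y)))"
      by (simp add: simps h1)
    show "A (\<Phi> (Tt (\<Psi> x) (\<Psi> y) (\<Psi> z))) = \<Phi> (Tt (\<Psi> (A x)) (\<Psi> (A y)) (\<Psi> (A z)))"
      by (simp add: simps h2)
    show "\<Phi> (B (\<Psi> x) (\<Psi> x)) = 0" by (simp add: h3 P0)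
    show "\<Phi> (Tt (\<Psi> x) (\<Psi> x) (\<Psi> y)) = 0" by (simp add: h4 P0)
    show "\<Phi> (B (\<Psi> (\<Phi> (B (\<Psi> x) (\<Psi> y)))) (\<Psi> (A z))) + \<Phi> (Tt (\<Psi> x) (\<Psi> y) (\<Psi> z)) +
          (\<Phi> (B (\<Psi> (\<Phi> (B (\<Psi> y) (\<Psi> z)))) (\<Psi> (A x))) + \<Phi> (Tt (\<Psi> y) (\<Psi> z) (\<Psi> x))) +
          (\<Phi> (B (\<Psi> (\<Phi> (B (\<Psi> z) (\<Psi> x)))) (\<Psi> (A y))) + \<Phi> (Tt (\<Psi> z) (\<Psi> x) (\<Psi> y))) = 0"
      using arg_cong[OF h5[rule_format, of "\<Psi> x" "\<Psi> y" "\<Psi> z"], of \<Phi>]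
      by (simp add: simps P0)
    show "\<Phi> (Tt (\<Psi> (\<Phi> (B (\<Psi> x) (\<Psi> y)))) (\<Psi> (A z)) (\<Psi> (A u))) +
          \<Phi> (Tt (\<Psi> (\<Phi> (B (\<Psi> y) (\<Psi> z)))) (\<Psi> (A x)) (\<Psi> (A u))) +
          \<Phi> (Tt (\<Psi> (\<Phi> (B (\<Psi> z) (\<Psi> x)))) (\<Psi> (A y)) (\<Psi> (A u))) = 0"
      using arg_cong[OF h6[rule_format, of "\<Psi> x" "\<Psi> y" "\<Psi> z" "\<Psi> u"], of \<Phi>]
      by (simp add: simps P0)
    show "\<Phi> (Tt (\<Psi> (A x)) (\<Psi> (A y)) (\<Psi> (\<Phi> (B (\<Psi> u) (\<Psi> v))))) =
          \<Phi> (B (\<Psi> (\<Phi> (Tt (\<Psi> x) (\<Psi> y) (\<Psi> u)))) (\<Psi> (A (A v)))) +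
          \<Phi> (B (\<Psi> (A (A u))) (\<Psi> (\<Phi> (Tt (\<Psi> x) (\<Psi> y) (\<Psi> v)))))"
      using arg_cong[OF h7[rule_format, of "\<Psi> x" "\<Psi> y" "\<Psi> u" "\<Psi> v"], of \<Phi>]
      by (simp add: simps)
    show "\<Phi> (Tt (\<Psi> (A (A u))) (\<Psi> (A (A v))) (\<Psi> (\<Phi> (Tt (\<Psi> x) (\<Psi> y) (\<Psi> z))))) =
          \<Phi> (Tt (\<Psi> (\<Phi> (Tt (\<Psi> u) (\<Psi> v) (\<Psi> x)))) (\<Psi> (A (A y))) (\<Psi> (A (A z)))) +
          \<Phi> (Tt (\<Psi> (A (A x))) (\<Psi> (\<Phi> (Tt (\<Psi> u) (\<Psi> v) (\<Psi> y)))) (\<Psi> (A (A z)))) +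
          \<Phi> (Tt (\<Psi> (A (A x))) (\<Psi> (A (A y))) (\<Psi> (\<Phi> (Tt (\<Psi> u) (\<Psi> v) (\<Psi> z)))))"
      using arg_cong[OF h8[rule_format, of "\<Psi> u" "\<Psi> v" "\<Psi> x" "\<Psi> y" "\<Psi> z"], of \<Phi>]
      by (simp add: simps)
  qed
qed


lemma c2L:
  assumes F: "\<And>i. bilin s (F i)"
  shows "ext2 F (fps_const x) w $ m = (\<Sum>i\<le>m. F i x (w $ (m - i)))"
  unfolding ext2_nth
proof (rule sum.cong[OF refl])
  fix i
  show "(\<Sum>j\<le>m - i. F i (fps_const x $ j) (w $ (m - i - j))) = F i x (w $ (m - i))"
    by (subst sum_only0) (auto simp: bilin_zero1[OF F])
qed

lemma c2R:
  assumes F: "\<And>i. bilin s (F i)"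
  shows "ext2 F w (fps_const y) $ m = (\<Sum>i\<le>m. F i (w $ (m - i)) y)"
  unfolding ext2_nth
proof (rule sum.cong[OF refl])
  fix i
  show "(\<Sum>j\<le>m - i. F i (w $ j) (fps_const y $ (m - i - j))) = F i (w $ (m - i)) y"
    by (subst sum_onlylast) (auto simp: bilin_zero2[OF F])
qed

lemma c2C:
  assumes F: "\<And>i. bilin s (F i)"
  shows "ext2 F (fps_const x) (fps_const y) $ m = F m x y"
  unfolding c2L[OF F]
  by (subst sum_onlylast) (auto simp: bilin_zero2[OF F])

lemma c3R:
  assumes G: "\<And>i. trilin s (G i)"
  shows "ext3 G (fps_const x) (fps_const y) w $ m = (\<Sum>i\<le>m. G i x y (w $ (m - i)))"
  unfolding ext3_nth
proof (rule sum.cong[OF refl])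
  fix i
  have "(\<Sum>j\<le>m - i. \<Sum>k\<le>m - i - j. G i (fps_const x $ j) (fps_const y $ k) (w $ (m - i - j - k)))
     = (\<Sum>k\<le>m - i - 0. G i (fps_const x $ 0) (fps_const y $ k) (w $ (m - i - 0 - k)))"
    by (subst sum_only0) (auto simp: trilin_zero1[OF G])
  also have "\<dots> = G i x y (w $ (m - i))"
    by (subst sum_only0) (auto simp: trilin_zero2[OF G])
  finally show "(\<Sum>j\<le>m - i. \<Sum>k\<le>m - i - j. G i (fps_const x $ j) (fps_const y $ k) (w $ (m - i - j - k)))
     = G i x y (w $ (m - i))" .
qed

lemma c3M:
  assumes G: "\<And>i. trilin s (G i)"
  shows "ext3 G (fps_const x) w (fps_const z) $ m = (\<Sum>i\<le>m. G i x (w $ (m - i)) z)"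
  unfolding ext3_nth
proof (rule sum.cong[OF refl])
  fix i
  have "(\<Sum>j\<le>m - i. \<Sum>k\<le>m - i - j. G i (fps_const x $ j) (w $ k) (fps_const z $ (m - i - j - k)))
     = (\<Sum>k\<le>m - i - 0. G i (fps_const x $ 0) (w $ k) (fps_const z $ (m - i - 0 - k)))"
    by (subst sum_only0) (auto simp: trilin_zero1[OF G])
  also have "\<dots> = G i x (w $ (m - i)) z"
    by (subst sum_onlylast) (auto simp: trilin_zero3[OF G])
  finally show "(\<Sum>j\<le>m - i. \<Sum>k\<le>m - i - j. G i (fps_const x $ j) (w $ k) (fps_const z $ (m - i - j - k)))
     = G i x (w $ (m - i)) z" .
qed

lemma c3L:
  assumes G: "\<And>i. trilin s (G i)"
  shows "ext3 G w (fps_const y) (fps_const z) $ m = (\<Sum>i\<le>m. G i (w $ (m - i)) y z)"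
  unfolding ext3_nth
proof (rule sum.cong[OF refl])
  fix i
  have "(\<Sum>j\<le>m - i. \<Sum>k\<le>m - i - j. G i (w $ j) (fps_const y $ k) (fps_const z $ (m - i - j - k)))
     = (\<Sum>j\<le>m - i. G i (w $ j) y (fps_const z $ (m - i - j)))"
  proof (rule sum.cong[OF refl])
    fix j show "(\<Sum>k\<le>m - i - j. G i (w $ j) (fps_const y $ k) (fps_const z $ (m - i - j - k)))
       = G i (w $ j) y (fps_const z $ (m - i - j))"
      by (subst sum_only0) (auto simp: trilin_zero2[OF G])
  qed
  also have "\<dots> = G i (w $ (m - i)) y z"
    by (subst sum_onlylast) (auto simp: trilin_zero3[OF G])
  finally show "(\<Sum>j\<le>m - i. \<Sum>k\<le>m - i - j. G i (w $ j) (fps_const y $ k) (fps_const z $ (m - i - j - k)))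
     = G i (w $ (m - i)) y z" .
qed

lemma c3C:
  assumes G: "\<And>i. trilin s (G i)"
  shows "ext3 G (fps_const x) (fps_const y) (fps_const z) $ m = G m x y z"
  unfolding c3R[OF G]
  by (subst sum_onlylast) (auto simp: trilin_zero3[OF G])


section \<open>The first nonvanishing term is a cocycle\<close>

lemma cocycle:
  fixes s :: "'k::field \<Rightarrow> 'v::ab_group_add \<Rightarrow> 'v"
  assumes hl: "hlya s b T a" and D: "deformation s b T a F G"
    and van: "\<And>k. 0 < k \<Longrightarrow> k \<le> n \<Longrightarrow> F k = (\<lambda>x y. 0) \<and> G k = (\<lambda>x y z. 0)"
  shows "HomZ23 s b T a (F (Suc n)) (G (Suc n))"
proof -
  have al: "lin s a" using hl unfolding hlya_def by (elim conjE) assumption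
  note DD = D[unfolded deformation_def]
  have F0: "F 0 = b" using DD by (elim conjE) assumption
  have G0: "G 0 = T" using DD by (elim conjE) assumption
  have Fb: "\<And>i. bilin s (F i)" using DD by (elim conjE) blast
  have Gt: "\<And>i. trilin s (G i)" using DD by (elim conjE) blast
  have H: "hlya (fps_scale s) (ext2 F) (ext3 G) (ext_map a)" using DD by (elim conjE) assumption
  note HH = H[unfolded hlya_def]
  let ?B = "ext2 F" and ?T = "ext3 G" and ?A = "ext_map a"
  have h1: "\<forall>x y. ?A (?B x y) = ?B (?A x) (?A y)" using HH by (elim conjE) assumption
  have h2: "\<forall>x y z. ?A (?T x y z) = ?T (?A x) (?A y) (?A z)" using HH by (elim conjE) assumption
  have h3: "\<forall>x. ?B x x = 0" using HH by (elim conjE) assumption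
  have h4: "\<forall>x y. ?T x x y = 0" using HH by (elim conjE) assumption
  have h5: "\<forall>x y z. (?B (?B x y) (?A z) + ?T x y z) + (?B (?B y z) (?A x) + ?T y z x)
               + (?B (?B z x) (?A y) + ?T z x y) = 0" using HH by (elim conjE) assumption
  have h6: "\<forall>x y z u. ?T (?B x y) (?A z) (?A u) + ?T (?B y z) (?A x) (?A u) + ?T (?B z x) (?A y) (?A u) = 0"
    using HH by (elim conjE) assumption
  have h7: "\<forall>x y u v. ?T (?A x) (?A y) (?B u v) = ?B (?T x y u) (?A (?A v)) + ?B (?A (?A u)) (?T x y v)"
    using HH by (elim conjE) assumption
  have h8: "\<forall>x y z u v. ?T (?A (?A u)) (?A (?A v)) (?T x y z)
        = ?T (?T u v x) (?A (?A y)) (?A (?A z)) + ?T (?A (?A x)) (?T u v y) (?A (?A z))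
          + ?T (?A (?A x)) (?A (?A y)) (?T u v z)" using HH by (elim conjE) assumption
  have sF: "(\<Sum>i\<le>Suc n. F i (X i) (Y i)) = F 0 (X 0) (Y 0) + F (Suc n) (X (Suc n)) (Y (Suc n))"
    for X Y by (rule sum_ends) (auto simp: van)
  have sG: "(\<Sum>i\<le>Suc n. G i (X i) (Y i) (Z i)) = G 0 (X 0) (Y 0) (Z 0) + G (Suc n) (X (Suc n)) (Y (Suc n)) (Z (Suc n))"
    for X Y Z by (rule sum_ends) (auto simp: van)
  have Fz: "F i 0 y = 0" "F i x 0 = 0" for i x y
    using bilin_zero1[OF Fb] bilin_zero2[OF Fb] by auto
  have Gz: "G i 0 y z = 0" "G i x 0 z = 0" "G i x y 0 = 0" for i x y z
    using trilin_zero1[OF Gt] trilin_zero2[OF Gt] trilin_zero3[OF Gt] by auto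
  have bz: "b 0 y = 0" "b x 0 = 0" for x y using Fz[of 0] F0 by auto
  have Tz: "T 0 y z = 0" "T x 0 z = 0" "T x y 0 = 0" for x y z using Gz[of 0] G0 by auto
  note cs = bz Tz c2C[OF Fb] c3C[OF Gt] c2L[OF Fb] c2R[OF Fb] c3L[OF Gt] c3M[OF Gt] c3R[OF Gt]
    ext_map_const[OF al] sF sG F0 G0 Fz Gz fps_add_nth
  let ?N = "Suc n"
  let ?f = "F ?N" and ?g = "G ?N"
  let ?c = "fps_const :: 'v \<Rightarrow> 'v fps"
  have C2: "HomC2 s a ?f"
    unfolding HomC2_def
  proof (intro conjI allI)
    show "bilin s ?f" by (rule Fb)
    fix x y
    show "?f x x = 0" using arg_cong[OF h3[rule_format, of "?c x"], of "\<lambda>p. p $ ?N"]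
      by (simp add: cs del: sum.atMost_Suc)
    show "?f (a x) (a y) = a (?f x y)"
      using arg_cong[OF h1[rule_format, of "?c x" "?c y"], of "\<lambda>p. p $ ?N"]
      by (simp add: cs ext_map_nth del: sum.atMost_Suc)
  qed
  have C3: "HomC3 s a ?g"
    unfolding HomC3_def
  proof (intro conjI allI)
    show "trilin s ?g" by (rule Gt)
    fix x y z
    show "?g x x z = 0" using arg_cong[OF h4[rule_format, of "?c x" "?c z"], of "\<lambda>p. p $ ?N"]
      by (simp add: cs del: sum.atMost_Suc)
    show "?g (a x) (a y) (a z) = a (?g x y z)"
      using arg_cong[OF h2[rule_format, of "?c x" "?c y" "?c z"], of "\<lambda>p. p $ ?N"]
      by (simp add: cs ext_map_nth del: sum.atMost_Suc)
  qed
  have dI: "deltaI2 b T a ?f ?g x y z u = 0" for x y z u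
  proof -
    have "T (a x) (a y) (?f z u) + ?g (a x) (a y) (b z u)
      = (b (?g x y z) (a (a u)) + ?f (T x y z) (a (a u))) + (b (a (a z)) (?g x y u) + ?f (a (a z)) (T x y u))"
      using arg_cong[OF h7[rule_format, of "?c x" "?c y" "?c z" "?c u"], of "\<lambda>p. p $ ?N"]
      by (simp add: cs del: sum.atMost_Suc)
    then show ?thesis unfolding deltaI2_def by (simp add: algebra_simps)
  qed
  have dII: "deltaII2 T a ?g x y u v w = 0" for x y u v w
  proof -
    have "T (a (a x)) (a (a y)) (?g u v w) + ?g (a (a x)) (a (a y)) (T u v w)
      = (T (?g x y u) (a (a v)) (a (a w)) + ?g (T x y u) (a (a v)) (a (a w)))
        + (T (a (a u)) (?g x y v) (a (a w)) + ?g (a (a u)) (T x y v) (a (a w)))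
        + (T (a (a u)) (a (a v)) (?g x y w) + ?g (a (a u)) (a (a v)) (T x y w))"
      using arg_cong[OF h8[rule_format, of "?c x" "?c y" "?c u" "?c v" "?c w"], of "\<lambda>p. p $ ?N"]
      by (simp add: cs del: sum.atMost_Suc)
    then show ?thesis unfolding deltaII2_def by (simp add: algebra_simps)
  qed
  have dI2: "dI2 b a ?f ?g x y z = 0" for x y z
    using arg_cong[OF h5[rule_format, of "?c x" "?c y" "?c z"], of "\<lambda>p. p $ ?N"]
    unfolding dI2_def by (simp add: cs algebra_simps del: sum.atMost_Suc)
  have dII2: "dII2 b T a ?f ?g x y z u = 0" for x y z u
    using arg_cong[OF h6[rule_format, of "?c x" "?c y" "?c z" "?c u"], of "\<lambda>p. p $ ?N"]
    unfolding dII2_def by (simp add: cs algebra_simps del: sum.atMost_Suc)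
  show ?thesis unfolding HomZ23_def using C2 C3 dI dII dI2 dII2 by blast
qed


lemma tri_finite: "finite (tri m)"
proof -
  have "tri m \<subseteq> {..m} \<times> {..m} \<times> {..m}" by (auto simp: tri_def)
  then show ?thesis by (rule finite_subset) auto
qed

lemma quad_finite: "finite (quad m)"
proof -
  have "quad m \<subseteq> {..m} \<times> {..m} \<times> {..m} \<times> {..m}" by (auto simp: quad_def)
  then show ?thesis by (rule finite_subset) auto
qed

lemma tri_sparse:
  assumes "\<And>i j k. i + j + k = m \<Longrightarrow> (0 < i \<and> i \<le> n) \<or> (0 < j \<and> j \<le> n) \<or> (0 < k \<and> k \<le> n)
             \<Longrightarrow> f i j k = (0::'a::comm_monoid_add)"
  shows tri_sparse_low: "m \<le> n \<Longrightarrow> (\<Sum>(i,j,k)\<in>tri m. f i j k) = (if m = 0 then f 0 0 0 else 0)"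
    and tri_sparse_N: "m = Suc n \<Longrightarrow> (\<Sum>(i,j,k)\<in>tri m. f i j k)
          = f (Suc n) 0 0 + f 0 (Suc n) 0 + f 0 0 (Suc n)"
proof -
  assume mn: "m \<le> n"
  show "(\<Sum>(i,j,k)\<in>tri m. f i j k) = (if m = 0 then f 0 0 0 else 0)"
  proof (cases "m = 0")
    case True
    then have "tri m = {(0,0,0)}" by (auto simp: tri_def)
    then show ?thesis using True by simp
  next
    case False
    have "(\<Sum>(i,j,k)\<in>tri m. f i j k) = 0"
    proof (rule sum.neutral, safe)
      fix i j k assume "(i,j,k) \<in> tri m"
      then have s: "i + j + k = m" by (simp add: tri_def)
      have "(0 < i \<and> i \<le> n) \<or> (0 < j \<and> j \<le> n) \<or> (0 < k \<and> k \<le> n)"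
        using s False mn by (cases "i=0"; cases "j=0"; simp; linarith)
      then show "f i j k = 0" using s by (intro assms)
    qed
    then show ?thesis using False by simp
  qed
next
  assume mN: "m = Suc n"
  let ?S = "{(Suc n,0,0),(0,Suc n,0),(0,0,Suc n)}"
  have "(\<Sum>(i,j,k)\<in>tri m. f i j k) = (\<Sum>(i,j,k)\<in>?S. f i j k)"
  proof (rule sum.mono_neutral_right[OF tri_finite])
    show "?S \<subseteq> tri m" using mN by (auto simp: tri_def)
    show "\<forall>x\<in>tri m - ?S. (case x of (i,j,k) \<Rightarrow> f i j k) = 0"
    proof
      fix x assume x: "x \<in> tri m - ?S"
      obtain i j k where xe: "x = (i,j,k)" by (cases x)
      have s: "i + j + k = Suc n" using x xe mN by (simp add: tri_def)
      have ns: "(i,j,k) \<notin> ?S" using x xe by simp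
      have "(0 < i \<and> i \<le> n) \<or> (0 < j \<and> j \<le> n) \<or> (0 < k \<and> k \<le> n)"
        using s ns by (cases "i=0"; cases "j=0"; cases "k=0"; simp; linarith)
      then show "(case x of (i,j,k) \<Rightarrow> f i j k) = 0" using xe s mN assms by simp
    qed
  qed
  also have "\<dots> = f (Suc n) 0 0 + f 0 (Suc n) 0 + f 0 0 (Suc n)"
    by (simp add: add.assoc)
  finally show "(\<Sum>(i,j,k)\<in>tri m. f i j k) = f (Suc n) 0 0 + f 0 (Suc n) 0 + f 0 0 (Suc n)" .
qed

lemma quad_sparse:
  assumes "\<And>i j k l. i + j + k + l = m \<Longrightarrow> (0 < i \<and> i \<le> n) \<or> (0 < j \<and> j \<le> n) \<or> (0 < k \<and> k \<le> n)
             \<or> (0 < l \<and> l \<le> n) \<Longrightarrow> f i j k l = (0::'a::comm_monoid_add)"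
  shows quad_sparse_low: "m \<le> n \<Longrightarrow> (\<Sum>(i,j,k,l)\<in>quad m. f i j k l) = (if m = 0 then f 0 0 0 0 else 0)"
    and quad_sparse_N: "m = Suc n \<Longrightarrow> (\<Sum>(i,j,k,l)\<in>quad m. f i j k l)
          = f (Suc n) 0 0 0 + f 0 (Suc n) 0 0 + f 0 0 (Suc n) 0 + f 0 0 0 (Suc n)"
proof -
  assume mn: "m \<le> n"
  show "(\<Sum>(i,j,k,l)\<in>quad m. f i j k l) = (if m = 0 then f 0 0 0 0 else 0)"
  proof (cases "m = 0")
    case True
    then have "quad m = {(0,0,0,0)}" by (auto simp: quad_def)
    then show ?thesis using True by simp
  next
    case False
    have "(\<Sum>(i,j,k,l)\<in>quad m. f i j k l) = 0"
    proof (rule sum.neutral, safe)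
      fix i j k l assume "(i,j,k,l) \<in> quad m"
      then have s: "i + j + k + l = m" by (simp add: quad_def)
      have "(0 < i \<and> i \<le> n) \<or> (0 < j \<and> j \<le> n) \<or> (0 < k \<and> k \<le> n) \<or> (0 < l \<and> l \<le> n)"
        using s False mn by (cases "i=0"; cases "j=0"; cases "k=0"; simp; linarith)
      then show "f i j k l = 0" using s by (intro assms)
    qed
    then show ?thesis using False by simp
  qed
next
  assume mN: "m = Suc n"
  let ?S = "{(Suc n,0,0,0),(0,Suc n,0,0),(0,0,Suc n,0),(0,0,0,Suc n)}"
  have "(\<Sum>(i,j,k,l)\<in>quad m. f i j k l) = (\<Sum>(i,j,k,l)\<in>?S. f i j k l)"
  proof (rule sum.mono_neutral_right[OF quad_finite])
    show "?S \<subseteq> quad m" using mN by (auto simp: quad_def)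
    show "\<forall>x\<in>quad m - ?S. (case x of (i,j,k,l) \<Rightarrow> f i j k l) = 0"
    proof
      fix x assume x: "x \<in> quad m - ?S"
      obtain i j k l where xe: "x = (i,j,k,l)" by (cases x)
      have s: "i + j + k + l = Suc n" using x xe mN by (simp add: quad_def)
      have ns: "(i,j,k,l) \<notin> ?S" using x xe by simp
      have "(0 < i \<and> i \<le> n) \<or> (0 < j \<and> j \<le> n) \<or> (0 < k \<and> k \<le> n) \<or> (0 < l \<and> l \<le> n)"
        using s ns by (cases "i=0"; cases "j=0"; cases "k=0"; cases "l=0"; simp; linarith)
      then show "(case x of (i,j,k,l) \<Rightarrow> f i j k l) = 0" using xe s mN assms by simp
    qed
  qed
  also have "\<dots> = f (Suc n) 0 0 0 + f 0 (Suc n) 0 0 + f 0 0 (Suc n) 0 + f 0 0 0 (Suc n)"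
    by (simp add: add.assoc)
  finally show "(\<Sum>(i,j,k,l)\<in>quad m. f i j k l) = f (Suc n) 0 0 0 + f 0 (Suc n) 0 0 + f 0 0 (Suc n) 0 + f 0 0 0 (Suc n)" .
qed

lemma ext2_tri: "ext2 F x y $ m = (\<Sum>(i,j,k)\<in>tri m. F i (x $ j) (y $ k))"
  unfolding ext2_nth by (rule T1)

lemma ext3_quad: "ext3 G x y z $ m = (\<Sum>(i,j,k,l)\<in>quad m. G i (x $ j) (y $ k) (z $ l))"
  unfolding ext3_nth by (rule T3)

definition Pe :: "nat \<Rightarrow> ('v \<Rightarrow> 'v) \<Rightarrow> nat \<Rightarrow> 'v \<Rightarrow> 'v::zero" where
  "Pe n h k = (if k = 0 then id else if k = Suc n then h else (\<lambda>_. 0))"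

lemma Pe_nth:
  "ext1 (Pe n h) x $ m = x $ m + (if Suc n \<le> m then h (x $ (m - Suc n)) else (0::'v::comm_monoid_add))"
proof (cases "Suc n \<le> m")
  case False
  have "ext1 (Pe n h) x $ m = (\<Sum>i\<le>m. Pe n h i (x $ (m - i)))" by (simp add: ext1_nth)
  also have "\<dots> = Pe n h 0 (x $ (m - 0))"
    by (rule sum_only0) (use False in \<open>auto simp: Pe_def\<close>)
  finally show ?thesis using False by (simp add: Pe_def)
next
  case True
  have "ext1 (Pe n h) x $ m = (\<Sum>i\<le>m. Pe n h i (x $ (m - i)))" by (simp add: ext1_nth)
  also have "\<dots> = (\<Sum>i\<in>{0, Suc n}. Pe n h i (x $ (m - i)))"
    by (rule sum.mono_neutral_right) (use True in \<open>auto simp: Pe_def\<close>)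
  finally show ?thesis using True by (simp add: Pe_def)
qed


section \<open>One gauge step\<close>

lemma Pe_lin: "module s \<Longrightarrow> lin s h \<Longrightarrow> lin s (Pe n h i)"
  by (auto simp: Pe_def lin_def module.scale_zero_right)

lemma Pe_comm: "lin s a \<Longrightarrow> (\<And>x. h (a x) = a (h x)) \<Longrightarrow> Pe n h i (a x) = a (Pe n h i x)"
  by (auto simp: Pe_def lin_zero)

lemma gauge_step:
  fixes s :: "'k::field \<Rightarrow> 'v::ab_group_add \<Rightarrow> 'v"
  assumes hl: "hlya s b T a" and Hz: "HomH23_zero s b T a"
    and D: "deformation s b T a F G"
    and van: "\<And>k. 0 < k \<Longrightarrow> k \<le> n \<Longrightarrow> F k = (\<lambda>x y. 0) \<and> G k = (\<lambda>x y z. 0)"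
  shows "\<exists>h F2 G2. HomC1 s a h \<and> deformation s b T a F2 G2
      \<and> (\<forall>k. 0 < k \<and> k \<le> Suc n \<longrightarrow> F2 k = (\<lambda>x y. 0) \<and> G2 k = (\<lambda>x y z. 0))
      \<and> (\<forall>x y. ext1 (Pe n h) (ext2 F x y) = ext2 F2 (ext1 (Pe n h) x) (ext1 (Pe n h) y))
      \<and> (\<forall>x y z. ext1 (Pe n h) (ext3 G x y z)
            = ext3 G2 (ext1 (Pe n h) x) (ext1 (Pe n h) y) (ext1 (Pe n h) z))"
proof -
  from cocycle[OF hl D van] Hz obtain h where hC: "HomC1 s a h"
    and fh: "F (Suc n) = deltaI1 b h" and gh: "G (Suc n) = deltaII1 T h"
    unfolding HomH23_zero_def HomB23_def by blast
  have hlin: "lin s h" and ha: "\<And>x. h (a x) = a (h x)" using hC by (auto simp: HomC1_def)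
  have ms: "module s" using hl unfolding hlya_def by (elim conjE) assumption
  have al: "lin s a" using hl unfolding hlya_def by (elim conjE) assumption
  note DD = D[unfolded deformation_def]
  have F0: "F 0 = b" using DD by (elim conjE) assumption
  have G0: "G 0 = T" using DD by (elim conjE) assumption
  have Fb: "\<And>i. bilin s (F i)" using DD by (elim conjE) blast
  have Gt: "\<And>i. trilin s (G i)" using DD by (elim conjE) blast
  have H: "hlya (fps_scale s) (ext2 F) (ext3 G) (ext_map a)" using DD by (elim conjE) assumption
  have Fz: "F i 0 y = 0" "F i x 0 = 0" for i x y
    using bilin_zero1[OF Fb] bilin_zero2[OF Fb] by auto
  have Gz: "G i 0 y z = 0" "G i x 0 z = 0" "G i x y 0 = 0" for i x y z
    using trilin_zero1[OF Gt] trilin_zero2[OF Gt] trilin_zero3[OF Gt] by auto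
  define E where "E = ext1 (Pe n h)"
  have El: "lin (fps_scale s) E" unfolding E_def by (rule ext1_lin[OF ms Pe_lin[OF ms hlin]])
  have Eb: "bij E" unfolding E_def by (rule ext1_bij) (simp add: Pe_def)
  have PeC: "Pe n h i (a x) = a (Pe n h i x)" for i x
    by (rule Pe_comm[where s=s]) (use al ha in auto)
  have EA: "E (ext_map a x) = ext_map a (E x)" for x
    using ext1_comm[where P="Pe n h", OF al PeC] unfolding E_def by (metis comp_apply)
  define B2 where "B2 = (\<lambda>x y. E (ext2 F (inv E x) (inv E y)))"
  define T2 where "T2 = (\<lambda>x y z. E (ext3 G (inv E x) (inv E y) (inv E z)))"
  have H2: "hlya (fps_scale s) B2 T2 (ext_map a)"
    unfolding B2_def T2_def by (rule transport_hlya[OF H Eb El EA])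
  have B2b: "bilin (fps_scale s) B2" using H2 unfolding hlya_def by (elim conjE) assumption
  have T2t: "trilin (fps_scale s) T2" using H2 unfolding hlya_def by (elim conjE) assumption
  define F2 where "F2 = (\<lambda>i u v. B2 (fps_const u) (fps_const v) $ i)"
  define G2 where "G2 = (\<lambda>i u v w. T2 (fps_const u) (fps_const v) (fps_const w) $ i)"
  have B2e: "B2 = ext2 F2" unfolding F2_def by (rule rep2[OF ms B2b])
  have T2e: "T2 = ext3 G2" unfolding G2_def by (rule rep3[OF ms T2t])
  have F2b: "bilin s (F2 i)" for i
    unfolding bilin_def lin_def
  proof (intro conjI allI)
    fix u u' v c
    show "F2 i (u + u') v = F2 i u v + F2 i u' v"
      by (simp only: F2_def fps_const_add[symmetric] lin_add[OF bilin1[OF B2b]] fps_add_nth)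
    show "F2 i v (u + u') = F2 i v u + F2 i v u'"
      by (simp only: F2_def fps_const_add[symmetric] lin_add[OF bilin2[OF B2b]] fps_add_nth)
    show "F2 i (s c u) v = s c (F2 i u v)"
      by (simp only: F2_def fps_scale_const_const[OF ms, symmetric] lin_scale[OF bilin1[OF B2b]]
          fps_scale_const_nth[OF ms])
    show "F2 i v (s c u) = s c (F2 i v u)"
      by (simp only: F2_def fps_scale_const_const[OF ms, symmetric] lin_scale[OF bilin2[OF B2b]]
          fps_scale_const_nth[OF ms])
  qed
  have G2t: "trilin s (G2 i)" for i
    unfolding trilin_def lin_def
  proof (intro conjI allI)
    fix u u' v w c
    show "G2 i (u + u') v w = G2 i u v w + G2 i u' v w"
      by (simp only: G2_def fps_const_add[symmetric] lin_add[OF trilin1[OF T2t]] fps_add_nth)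
    show "G2 i v (u + u') w = G2 i v u w + G2 i v u' w"
      by (simp only: G2_def fps_const_add[symmetric] lin_add[OF trilin2[OF T2t]] fps_add_nth)
    show "G2 i v w (u + u') = G2 i v w u + G2 i v w u'"
      by (simp only: G2_def fps_const_add[symmetric] lin_add[OF trilin3[OF T2t]] fps_add_nth)
    show "G2 i (s c u) v w = s c (G2 i u v w)"
      by (simp only: G2_def fps_scale_const_const[OF ms, symmetric] lin_scale[OF trilin1[OF T2t]]
          fps_scale_const_nth[OF ms])
    show "G2 i v (s c u) w = s c (G2 i v u w)"
      by (simp only: G2_def fps_scale_const_const[OF ms, symmetric] lin_scale[OF trilin2[OF T2t]]
          fps_scale_const_nth[OF ms])
    show "G2 i v w (s c u) = s c (G2 i v w u)"
      by (simp only: G2_def fps_scale_const_const[OF ms, symmetric] lin_scale[OF trilin3[OF T2t]]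
          fps_scale_const_nth[OF ms])
  qed
  have Einv: "inv E (E x) = x" for x using Eb by (simp add: bij_is_inj)
  have EEinv: "E (inv E x) = x" for x using Eb by (simp add: bij_is_surj surj_f_inv_f)
  have eqF: "E (ext2 F x y) = ext2 F2 (E x) (E y)" for x y
    by (simp add: B2e[symmetric] B2_def Einv)
  have eqG: "E (ext3 G x y z) = ext3 G2 (E x) (E y) (E z)" for x y z
    by (simp add: T2e[symmetric] T2_def Einv)
  define p where "p = (\<lambda>u. inv E (fps_const u))"
  have pc: "p u $ m + (if Suc n \<le> m then h (p u $ (m - Suc n)) else 0) = fps_const u $ m" for u m
    using arg_cong[OF EEinv[of "fps_const u"], of "\<lambda>q. q $ m"]
    unfolding p_def E_def Pe_nth .
  have p0: "p u $ 0 = u" for u using pc[of u 0] by simp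
  have plow: "0 < m \<Longrightarrow> m \<le> n \<Longrightarrow> p u $ m = 0" for u m using pc[of u m] by simp
  have pN: "p u $ Suc n = - h (p u $ 0)" for u using pc[of u "Suc n"]
    by (simp add: eq_neg_iff_add_eq_0)
  have F2c: "F2 i u v = ext2 F (p u) (p v) $ i + (if Suc n \<le> i then h (ext2 F (p u) (p v) $ (i - Suc n)) else 0)"
    for i u v unfolding F2_def B2_def p_def E_def Pe_nth ..
  have G2c: "G2 i u v w = ext3 G (p u) (p v) (p w) $ i
       + (if Suc n \<le> i then h (ext3 G (p u) (p v) (p w) $ (i - Suc n)) else 0)"
    for i u v w unfolding G2_def T2_def p_def E_def Pe_nth ..
  have spF: "F i (p u $ j) (p v $ k) = 0"
    if "(0 < i \<and> i \<le> n) \<or> (0 < j \<and> j \<le> n) \<or> (0 < k \<and> k \<le> n)" for i j k u v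
    using that van plow Fz by auto
  have spG: "G i (p u $ j) (p v $ k) (p w $ l) = 0"
    if "(0 < i \<and> i \<le> n) \<or> (0 < j \<and> j \<le> n) \<or> (0 < k \<and> k \<le> n) \<or> (0 < l \<and> l \<le> n)"
    for i j k l u v w
    using that van plow Gz by auto
  have wlow: "m \<le> n \<Longrightarrow> ext2 F (p u) (p v) $ m = (if m = 0 then b u v else 0)" for m u v
    unfolding ext2_tri by (subst tri_sparse_low[where n=n]) (auto intro: spF simp: F0 p0)
  have wN: "ext2 F (p u) (p v) $ Suc n = F (Suc n) u v + b (- h u) v + b u (- h v)" for u v
    unfolding ext2_tri by (subst tri_sparse_N[where n=n]) (auto intro: spF simp: F0 p0 pN)
  have zlow: "m \<le> n \<Longrightarrow> ext3 G (p u) (p v) (p w) $ m = (if m = 0 then T u v w else 0)" for m u v w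
    unfolding ext3_quad by (subst quad_sparse_low[where n=n]) (auto intro: spG simp: G0 p0)
  have zN: "ext3 G (p u) (p v) (p w) $ Suc n
      = G (Suc n) u v w + T (- h u) v w + T u (- h v) w + T u v (- h w)" for u v w
    unfolding ext3_quad by (subst quad_sparse_N[where n=n]) (auto intro: spG simp: G0 p0 pN)
  have bl1: "lin s (\<lambda>x. b x y)" and bl2: "lin s (\<lambda>y. b x y)" for x y
    using Fb[of 0] F0 by (auto simp: bilin_def)
  have Tl1: "lin s (\<lambda>x. T x y z)" and Tl2: "lin s (\<lambda>y. T x y z)" and Tl3: "lin s (\<lambda>z. T x y z)" for x y z
    using Gt[of 0] G0 by (auto simp: trilin_def)
  have F20: "F2 0 = b" using wlow[of 0] by (intro ext) (simp add: F2c)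
  have G20: "G2 0 = T" using zlow[of 0] by (intro ext) (simp add: G2c)
  have F2van: "F2 k = (\<lambda>x y. 0)" if "0 < k" "k \<le> Suc n" for k
  proof (cases "k = Suc n")
    case True
    show ?thesis
    proof (intro ext)
      fix u v
      show "F2 k u v = 0"
        using True wlow[of 0 u v]
        by (simp add: F2c wN fh deltaI1_def lin_minus[OF bl1] lin_minus[OF bl2])
    qed
  next
    case False
    then show ?thesis using that wlow by (intro ext) (simp add: F2c)
  qed
  have G2van: "G2 k = (\<lambda>x y z. 0)" if "0 < k" "k \<le> Suc n" for k
  proof (cases "k = Suc n")
    case True
    show ?thesis
    proof (intro ext)
      fix u v w
      show "G2 k u v w = 0"
        using True zlow[of 0 u v w]
        by (simp add: G2c zN gh deltaII1_def lin_minus[OF Tl1] lin_minus[OF Tl2] lin_minus[OF Tl3])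
    qed
  next
    case False
    then show ?thesis using that zlow by (intro ext) (simp add: G2c)
  qed
  have D2: "deformation s b T a F2 G2"
    unfolding deformation_def using F20 G20 F2b G2t H2 B2e T2e by simp
  show ?thesis
    using hC D2 F2van G2van eqF eqG unfolding E_def by blast
qed


section \<open>Iteration\<close>

definition Inv :: "('k::field \<Rightarrow> 'v \<Rightarrow> 'v) \<Rightarrow> ('v::ab_group_add \<Rightarrow> 'v \<Rightarrow> 'v)
     \<Rightarrow> ('v \<Rightarrow> 'v \<Rightarrow> 'v \<Rightarrow> 'v) \<Rightarrow> ('v \<Rightarrow> 'v)
     \<Rightarrow> (nat \<Rightarrow> 'v \<Rightarrow> 'v \<Rightarrow> 'v) \<Rightarrow> (nat \<Rightarrow> 'v \<Rightarrow> 'v \<Rightarrow> 'v \<Rightarrow> 'v) \<Rightarrow> nat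
     \<Rightarrow> (nat \<Rightarrow> 'v \<Rightarrow> 'v) \<Rightarrow> (nat \<Rightarrow> 'v \<Rightarrow> 'v \<Rightarrow> 'v) \<Rightarrow> (nat \<Rightarrow> 'v \<Rightarrow> 'v \<Rightarrow> 'v \<Rightarrow> 'v) \<Rightarrow> bool" where
  "Inv s b T a F G n P F' G' \<longleftrightarrow> P 0 = id \<and> (\<forall>i. lin s (P i)) \<and> (\<forall>i x. P i (a x) = a (P i x))
     \<and> deformation s b T a F' G'
     \<and> (\<forall>k. 0 < k \<and> k \<le> n \<longrightarrow> F' k = (\<lambda>x y. 0) \<and> G' k = (\<lambda>x y z. 0))
     \<and> (\<forall>x y. ext1 P (ext2 F x y) = ext2 F' (ext1 P x) (ext1 P y))
     \<and> (\<forall>x y z. ext1 P (ext3 G x y z) = ext3 G' (ext1 P x) (ext1 P y) (ext1 P z))"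

lemma Inv_step:
  fixes s :: "'k::field \<Rightarrow> 'v::ab_group_add \<Rightarrow> 'v"
  assumes hl: "hlya s b T a" and Hz: "HomH23_zero s b T a"
    and I: "Inv s b T a F G n P F' G'"
  shows "\<exists>P2 F2 G2. Inv s b T a F G (Suc n) P2 F2 G2 \<and> (\<forall>k\<le>n. P2 k = P k)"
proof -
  have ms: "module s" using hl unfolding hlya_def by (elim conjE) assumption
  have al: "lin s a" using hl unfolding hlya_def by (elim conjE) assumption
  have P0: "P 0 = id" and Pl: "\<And>i. lin s (P i)" and Pa: "\<And>i x. P i (a x) = a (P i x)"
    and D: "deformation s b T a F' G'"
    and van: "\<And>k. 0 < k \<Longrightarrow> k \<le> n \<Longrightarrow> F' k = (\<lambda>x y. 0) \<and> G' k = (\<lambda>x y z. 0)"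
    and eF: "\<And>x y. ext1 P (ext2 F x y) = ext2 F' (ext1 P x) (ext1 P y)"
    and eG: "\<And>x y z. ext1 P (ext3 G x y z) = ext3 G' (ext1 P x) (ext1 P y) (ext1 P z)"
    using I unfolding Inv_def by auto
  obtain h F2 G2 where hC: "HomC1 s a h" and D2: "deformation s b T a F2 G2"
    and van2: "\<forall>k. 0 < k \<and> k \<le> Suc n \<longrightarrow> F2 k = (\<lambda>x y. 0) \<and> G2 k = (\<lambda>x y z. 0)"
    and eF2: "\<forall>x y. ext1 (Pe n h) (ext2 F' x y) = ext2 F2 (ext1 (Pe n h) x) (ext1 (Pe n h) y)"
    and eG2: "\<forall>x y z. ext1 (Pe n h) (ext3 G' x y z)
            = ext3 G2 (ext1 (Pe n h) x) (ext1 (Pe n h) y) (ext1 (Pe n h) z)"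
    using gauge_step[OF hl Hz D van] by blast
  have hlin: "lin s h" and ha: "\<And>x. h (a x) = a (h x)" using hC by (auto simp: HomC1_def)
  have Pel: "lin s (Pe n h i)" for i by (rule Pe_lin[OF ms hlin])
  have PeC: "Pe n h i (a x) = a (Pe n h i x)" for i x
    by (rule Pe_comm[where s=s]) (use al ha in auto)
  define P2 where "P2 = conv1 (Pe n h) P"
  have comp: "ext1 P2 x = ext1 (Pe n h) (ext1 P x)" for x
    unfolding P2_def by (rule ext1_conv1[symmetric]) (rule lin_add[OF Pel])
  have P20: "P2 0 = id" by (rule ext) (simp add: P2_def conv1_def Pe_def P0)
  have P2l: "lin s (P2 i)" for i
    unfolding lin_def P2_def conv1_def
    by (simp add: lin_add[OF Pel] lin_add[OF Pl] lin_scale[OF Pel] lin_scale[OF Pl]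
        sum.distrib module.scale_sum_right[OF ms])
  have P2a: "P2 i (a x) = a (P2 i x)" for i x
    unfolding P2_def conv1_def by (simp add: Pa PeC lin_sum[OF al])
  have agree: "P2 k = P k" if "k \<le> n" for k
  proof (rule ext)
    fix v
    have "P2 k v = (\<Sum>i\<le>k. Pe n h i (P (k - i) v))" by (simp add: P2_def conv1_def)
    also have "\<dots> = Pe n h 0 (P (k - 0) v)"
      by (rule sum_only0) (use that in \<open>auto simp: Pe_def\<close>)
    finally show "P2 k v = P k v" by (simp add: Pe_def)
  qed
  have "Inv s b T a F G (Suc n) P2 F2 G2"
    unfolding Inv_def
  proof (intro conjI allI impI)
    show "P2 0 = id" by (rule P20)
    show "lin s (P2 i)" for i by (rule P2l)
    show "P2 i (a x) = a (P2 i x)" for i x by (rule P2a)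
    show "deformation s b T a F2 G2" by (rule D2)
    show "F2 k = (\<lambda>x y. 0)" if "0 < k \<and> k \<le> Suc n" for k using van2 that by blast
    show "G2 k = (\<lambda>x y z. 0)" if "0 < k \<and> k \<le> Suc n" for k using van2 that by blast
    show "ext1 P2 (ext2 F x y) = ext2 F2 (ext1 P2 x) (ext1 P2 y)" for x y
      by (simp only: comp eF eF2[rule_format])
    show "ext1 P2 (ext3 G x y z) = ext3 G2 (ext1 P2 x) (ext1 P2 y) (ext1 P2 z)" for x y z
      by (simp only: comp eG eG2[rule_format])
  qed
  then show ?thesis using agree by blast
qed

lemma ext1_id: "ext1 (\<lambda>i. if i = 0 then id else (\<lambda>_. 0)) x = (x :: 'v::comm_monoid_add fps)"
proof (rule fps_ext)
  fix m
  show "ext1 (\<lambda>i. if i = 0 then id else (\<lambda>_. 0)) x $ m = x $ m"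
    unfolding ext1_nth by (subst sum_only0) auto
qed

lemma InvD1:
  assumes "Inv s b T a F G n P F' G'"
  shows "P 0 = id"
  using assms unfolding Inv_def by (elim conjE) assumption

lemma InvD2:
  assumes "Inv s b T a F G n P F' G'"
  shows "\<forall>i. lin s (P i)"
  using assms unfolding Inv_def by (elim conjE) assumption

lemma InvD3:
  assumes "Inv s b T a F G n P F' G'"
  shows "\<forall>i x. P i (a x) = a (P i x)"
  using assms unfolding Inv_def by (elim conjE) assumption

lemma InvD4:
  assumes "Inv s b T a F G n P F' G'"
  shows "deformation s b T a F' G'"
  using assms unfolding Inv_def by (elim conjE) assumption

lemma InvD5:
  assumes "Inv s b T a F G n P F' G'"
  shows "\<forall>k. 0 < k \<and> k \<le> n \<longrightarrow> F' k = (\<lambda>x y. 0) \<and> G' k = (\<lambda>x y z. 0)"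
  using assms unfolding Inv_def by (elim conjE) assumption

lemma InvD6:
  assumes "Inv s b T a F G n P F' G'"
  shows "\<forall>x y. ext1 P (ext2 F x y) = ext2 F' (ext1 P x) (ext1 P y)"
  using assms unfolding Inv_def by (elim conjE) assumption

lemma InvD7:
  assumes "Inv s b T a F G n P F' G'"
  shows "\<forall>x y z. ext1 P (ext3 G x y z) = ext3 G' (ext1 P x) (ext1 P y) (ext1 P z)"
  using assms unfolding Inv_def by (elim conjE) assumption

theorem mainTheorem5:
  fixes s :: "'k::field \<Rightarrow> 'v::ab_group_add \<Rightarrow> 'v"
    and b :: "'v \<Rightarrow> 'v \<Rightarrow> 'v"
    and T :: "'v \<Rightarrow> 'v \<Rightarrow> 'v \<Rightarrow> 'v"
    and a :: "'v \<Rightarrow> 'v"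
  assumes "hlya s b T a"
    and "HomH23_zero s b T a"
  shows "analytically_rigid s b T a"
  unfolding analytically_rigid_def
proof (intro allI impI)
  fix F G assume D: "deformation s b T a F G"
  note hl = assms(1) and Hz = assms(2)
  have ms: "module s" using hl unfolding hlya_def by (elim conjE) assumption
  have al: "lin s a" using hl unfolding hlya_def by (elim conjE) assumption
  define I0 where "I0 = (\<lambda>i::nat. if i = 0 then (id :: 'v \<Rightarrow> 'v) else (\<lambda>_. 0))"
  have e1: "ext1 I0 x = x" for x unfolding I0_def by (rule ext1_id)
  have I0l: "lin s (I0 i)" for i
    by (simp add: I0_def lin_def module.scale_zero_right[OF ms])
  have I0a: "I0 i (a x) = a (I0 i x)" for i x
    by (simp add: I0_def lin_zero[OF al])
  have inv0: "Inv s b T a F G 0 I0 F G"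
    unfolding Inv_def e1 using I0l I0a D by (simp add: I0_def)
  define Inv' where "Inv' = (\<lambda>n (t :: (nat \<Rightarrow> 'v \<Rightarrow> 'v) \<times> (nat \<Rightarrow> 'v \<Rightarrow> 'v \<Rightarrow> 'v) \<times> (nat \<Rightarrow> 'v \<Rightarrow> 'v \<Rightarrow> 'v \<Rightarrow> 'v)). Inv s b T a F G n (fst t) (fst (snd t)) (snd (snd t)))"
  define nxt where "nxt = (\<lambda>n (t :: (nat \<Rightarrow> 'v \<Rightarrow> 'v) \<times> (nat \<Rightarrow> 'v \<Rightarrow> 'v \<Rightarrow> 'v) \<times> (nat \<Rightarrow> 'v \<Rightarrow> 'v \<Rightarrow> 'v \<Rightarrow> 'v)). SOME t'. Inv' (Suc n) t' \<and> (\<forall>k\<le>n. fst t' k = fst t k))"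
  define seq where "seq = rec_nat (I0, F, G) nxt"
  have seq0: "seq 0 = (I0, F, G)" by (simp add: seq_def)
  have seqS: "seq (Suc n) = nxt n (seq n)" for n by (simp add: seq_def)
  have ex: "\<exists>t'. Inv' (Suc n) t' \<and> (\<forall>k\<le>n. fst t' k = fst t k)" if it: "Inv' n t" for n t
  proof -
    obtain P2 F2 G2 where "Inv s b T a F G (Suc n) P2 F2 G2" "\<forall>k\<le>n. P2 k = fst t k"
      using Inv_step[OF hl Hz it[unfolded Inv'_def]] by blast
    then show ?thesis
      unfolding Inv'_def by (intro exI[of _ "(P2,F2,G2)"] conjI) (unfold fst_conv snd_conv, assumption)+
  qed
  have nx: "Inv' (Suc n) (nxt n t) \<and> (\<forall>k\<le>n. fst (nxt n t) k = fst t k)" if "Inv' n t" for n t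
  proof -
    have "\<exists>t'. Inv' (Suc n) t' \<and> (\<forall>k\<le>n. fst t' k = fst t k)" by (rule ex[OF that])
    then show ?thesis unfolding nxt_def by (rule someI_ex)
  qed
  have invs: "Inv' n (seq n)" for n
  proof (induction n)
    case 0 show ?case unfolding seq0 Inv'_def fst_conv snd_conv by (rule inv0)
  next
    case (Suc n)
    show ?case unfolding seqS using nx[OF Suc] by (rule conjunct1)
  qed
  have agS: "fst (seq (Suc n)) k = fst (seq n) k" if "k \<le> n" for k n
    using conjunct2[OF nx[OF invs[of n]]] that unfolding seqS by blast
  define Q where "Q = (\<lambda>n. fst (seq n))"
  have ag: "Q (k + d) k = Q k k" for k d
  proof (induction d)
    case 0 show ?case by simp
  next
    case (Suc d)
    have "Q (k + Suc d) k = fst (seq (Suc (k + d))) k" by (simp add: Q_def)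
    also have "\<dots> = fst (seq (k + d)) k" by (rule agS) simp
    also have "\<dots> = Q k k" using Suc.IH by (simp add: Q_def)
    finally show ?case .
  qed
  have ag': "Q m k = Q k k" if "k \<le> m" for k m
  proof -
    have "m = k + (m - k)" using that by simp
    then have "Q m k = Q (k + (m - k)) k" by (rule arg_cong)
    then show ?thesis using ag[of k "m - k"] by (rule trans)
  qed
  define P where "P = (\<lambda>k. Q k k)"
  have IQ: "Inv s b T a F G n (Q n) (fst (snd (seq n))) (snd (snd (seq n)))" for n
    using invs[of n] unfolding Inv'_def Q_def .
  have QP: "i \<le> m \<Longrightarrow> Q m i = P i" for i m unfolding P_def by (rule ag')
  have P0: "P 0 = id" using InvD1[OF IQ[of 0]] unfolding P_def .
  have Pl: "lin s (P i)" for i using InvD2[OF IQ[of i]] unfolding P_def by blast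
  have Pa: "P i (a x) = a (P i x)" for i x using InvD3[OF IQ[of i]] unfolding P_def by blast
  have cP: "ext1 (Q m) x $ j = ext1 P x $ j" if "j \<le> m" for m j x
    by (rule ext1_cong_nth) (use that QP in auto)
  have eqF: "ext1 P (ext2 F x y) = ext2 (null_br b) (ext1 P x) (ext1 P y)" for x y
  proof (rule fps_ext)
    fix m
    define F' where "F' = fst (snd (seq m))"
    define G' where "G' = snd (snd (seq m))"
    have I: "Inv s b T a F G m (Q m) F' G'" using IQ[of m] by (simp add: F'_def G'_def)
    have D': "deformation s b T a F' G'" using InvD4[OF I] .
    have F'0: "F' 0 = b" using D' by (simp add: deformation_def)
    have F'n: "F' i = null_br b i" if "i \<le> m" for i
      using InvD5[OF I] that F'0 by (cases "i = 0") (auto simp: null_br_def)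
    have "ext1 P (ext2 F x y) $ m = ext1 (Q m) (ext2 F x y) $ m"
      by (rule ext1_cong_nth) (simp_all add: QP)
    also have "\<dots> = ext2 F' (ext1 (Q m) x) (ext1 (Q m) y) $ m"
      using InvD6[OF I] by simp
    also have "\<dots> = ext2 (null_br b) (ext1 P x) (ext1 P y) $ m"
      by (rule ext2_cong_nth) (simp_all add: F'n cP)
    finally show "ext1 P (ext2 F x y) $ m = ext2 (null_br b) (ext1 P x) (ext1 P y) $ m" .
  qed
  have eqG: "ext1 P (ext3 G x y z) = ext3 (null_tr T) (ext1 P x) (ext1 P y) (ext1 P z)" for x y z
  proof (rule fps_ext)
    fix m
    define F' where "F' = fst (snd (seq m))"
    define G' where "G' = snd (snd (seq m))"
    have I: "Inv s b T a F G m (Q m) F' G'" using IQ[of m] by (simp add: F'_def G'_def)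
    have D': "deformation s b T a F' G'" using InvD4[OF I] .
    have G'0: "G' 0 = T" using D' by (simp add: deformation_def)
    have G'n: "G' i = null_tr T i" if "i \<le> m" for i
      using InvD5[OF I] that G'0 by (cases "i = 0") (auto simp: null_tr_def)
    have "ext1 P (ext3 G x y z) $ m = ext1 (Q m) (ext3 G x y z) $ m"
      by (rule ext1_cong_nth) (simp_all add: QP)
    also have "\<dots> = ext3 G' (ext1 (Q m) x) (ext1 (Q m) y) (ext1 (Q m) z) $ m"
      using InvD7[OF I] by simp
    also have "\<dots> = ext3 (null_tr T) (ext1 P x) (ext1 P y) (ext1 P z) $ m"
      by (rule ext3_cong_nth) (simp_all add: G'n cP)
    finally show "ext1 P (ext3 G x y z) $ m = ext3 (null_tr T) (ext1 P x) (ext1 P y) (ext1 P z) $ m" .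
  qed
  show "equivalent_deformations s a F G (null_br b) (null_tr T)"
    unfolding equivalent_deformations_def
  proof (intro exI conjI allI)
    show "P 0 = id" by (rule P0)
    show "lin s (P i)" for i by (rule Pl)
    show "lin (fps_scale s) (ext1 P)" by (rule ext1_lin[where P=P, OF ms Pl])
    show "bij (ext1 P)" by (rule ext1_bij[where P=P, OF P0])
    show "ext1 P \<circ> ext_map a = ext_map a \<circ> ext1 P" by (rule ext1_comm[where P=P, OF al Pa])
    show "ext1 P (ext2 F x y) = ext2 (null_br b) (ext1 P x) (ext1 P y)" for x y by (rule eqF)
    show "ext1 P (ext3 G x y z) = ext3 (null_tr T) (ext1 P x) (ext1 P y) (ext1 P z)" for x y z
      by (rule eqG)
  qed
qed

end
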